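(* Let $\mathcal{A}$ be a parity game arena satisfying the standing assumption below, such that in the escape arena $\mathcal{A}_\bot$ every vertex of player $0$ has at most two successors. Define $\sigma_0=V_0\times\{\bot\}$ and $\sigma_{i+1}=I_{\sigma_i}$ (non-deterministic strategy iteration with the "all profitable switches" heuristic), stopping at the first $l$ with $S_{\sigma_l}=\emptyset$. Then the number of improvement steps needed to reach an optimal winning strategy is at most $3\cdot 1.724^{|V_0|}$.
   Context: Parity game arena: $\mathcal{A}=(V,E,o,c)$ with $V$ finite, $E\subseteq V\times V$, every vertex has a successor, owner map $o:V\to\{0,1\}$, colouring $c:V\to\{0,\dots,d-1\}$ using every colour; $V_i=o^{-1}(i)$. An infinite vertex sequence is won by player $0$ (parity condition) iff the largest colour occurring infinitely often is even. A cycle is $i$-dominated if its largest colour has parity $i$. Escape arena $\mathcal{A}_\bot$: vertices $V\cup\{\bot\}$, edges $E_\bot=E\cup(V_0\times\{\bot\})$, $\bot$ owned by player $0$ with no outgoing edges. Let $E_0=E_\bot\cap(V_0\times(V\cup\{\bot\}))$, $E_1=E\cap(V_1\times V)$. A strategy of player $i$ is a set $\sigma\subseteq E_i$ with $s\sigma\neq\emptyset$ for all $s\in V_i$. $\mathcal{A}_\bot|_{\sigma,\tau}$ has edge set $\sigma\cup\tau$, $\mathcal{A}_\bot|_\sigma$ has edge set $\sigma\cup E_1$; a play is a maximal path. Colour profiles: $\mathcal{P}=\mathbb{Z}^d\cup\{-\infty,\infty\}$, $\text{\o}$ zero vector; $\wp(s)$ unit vector at coordinate $c(s)$; for a finite path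 the sum over its vertices in $V$; for an infinite play $\infty$ if won by player $0$, else $-\infty$. Addition componentwise, $x+\pm\infty=\pm\infty$. Order $\prec$: $-\infty$ least, $\infty$ greatest; for distinct $p,p'\in\mathbb{Z}^d$ with $k$ the largest index where they differ, $p\prec p'$ iff ($k$ even and $p_k<p'_k$) or ($k$ odd and $p_k>p'_k$). Valuation: $\mathcal{V}_\sigma(\bot)=\text{\o}$, $\mathcal{V}_\sigma(s)=\min^\prec_\tau\max^\prec\{\wp(\pi)\mid\pi$ a play in $\mathcal{A}_\bot|_{\sigma,\tau}$ from $s\}$. $\sigma$ is reasonable if $\mathcal{A}_\bot|_\sigma$ has no $1$-dominated cycle. For reasonable $\sigma$, $(s,t)\in E_0$ is an improvement if $\mathcal{V}_\sigma(s)\preceq\wp(s)+\mathcal{V}_\sigma(t)$ and a strict improvement if $\prec$ holds; $I_\sigma$, $S_\sigma$ are the sets of improvements and strict improvements. An optimal winning strategy for player $0$ is one with which player $0$ wins every vertex of $W_0$, the winning set of player $0$ in the parity game on $\mathcal{A}$. Standing assumption: the subgraph of $(V,E)$ induced by $V_1$ contains no $1$-dominated cycle. *)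

theory Defs
  imports Complex_Main
begin

definition arena :: "'v set \<Rightarrow> ('v \<times> 'v) set \<Rightarrow> ('v \<Rightarrow> nat) \<Rightarrow> ('v \<Rightarrow> nat) \<Rightarrow> nat \<Rightarrow> bool" where
  "arena V E own c d \<longleftrightarrow> finite V \<and> E \<subseteq> V \<times> V \<and> (\<forall>v\<in>V. \<exists>w. (v, w) \<in> E)
     \<and> (\<forall>v\<in>V. own v \<in> {0, 1}) \<and> c ` V = {0..<d}"

definition Vown :: "'v set \<Rightarrow> ('v \<Rightarrow> nat) \<Rightarrow> nat \<Rightarrow> 'v set" where
  "Vown V own i = {v \<in> V. own v = i}"

definition is_cycle :: "('v \<times> 'v) set \<Rightarrow> 'v list \<Rightarrow> bool" where
  "is_cycle F xs \<longleftrightarrow> xs \<noteq> [] \<and> (\<forall>i < length xs. (xs ! i, xs ! ((i + 1) mod length xs)) \<in> F)"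

definition dominated :: "('v \<Rightarrow> nat) \<Rightarrow> nat \<Rightarrow> 'v list \<Rightarrow> bool" where
  "dominated c i xs \<longleftrightarrow> Max (c ` set xs) mod 2 = i"

definition standing_assumption :: "'v set \<Rightarrow> ('v \<times> 'v) set \<Rightarrow> ('v \<Rightarrow> nat) \<Rightarrow> ('v \<Rightarrow> nat) \<Rightarrow> bool" where
  "standing_assumption V E own c \<longleftrightarrow>
     \<not> (\<exists>xs. is_cycle (E \<inter> (Vown V own 1 \<times> Vown V own 1)) xs \<and> dominated c 1 xs)"

definition parity_win0 :: "('v \<Rightarrow> nat) \<Rightarrow> (nat \<Rightarrow> 'v) \<Rightarrow> bool" where
  "parity_win0 c f \<longleftrightarrow> even (Max {k. \<exists>\<^sub>\<infinity>i. c (f i) = k})"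

definition strategy0_hist :: "'v set \<Rightarrow> ('v \<times> 'v) set \<Rightarrow> ('v \<Rightarrow> nat) \<Rightarrow> ('v list \<Rightarrow> 'v) \<Rightarrow> bool" where
  "strategy0_hist V E own g \<longleftrightarrow>
     (\<forall>h. h \<noteq> [] \<longrightarrow> set h \<subseteq> V \<longrightarrow> own (last h) = 0 \<longrightarrow> (last h, g h) \<in> E)"

definition consistent_play :: "'v set \<Rightarrow> ('v \<times> 'v) set \<Rightarrow> ('v \<Rightarrow> nat) \<Rightarrow> ('v list \<Rightarrow> 'v) \<Rightarrow> 'v \<Rightarrow> (nat \<Rightarrow> 'v) \<Rightarrow> bool" where
  "consistent_play V E own g s f \<longleftrightarrow> f 0 = s \<and> (\<forall>i. (f i, f (Suc i)) \<in> E)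
     \<and> (\<forall>i. own (f i) = 0 \<longrightarrow> f (Suc i) = g (map f [0..<Suc i]))"

definition W0 :: "'v set \<Rightarrow> ('v \<times> 'v) set \<Rightarrow> ('v \<Rightarrow> nat) \<Rightarrow> ('v \<Rightarrow> nat) \<Rightarrow> 'v set" where
  "W0 V E own c = {s \<in> V. \<exists>g. strategy0_hist V E own g \<and>
      (\<forall>f. consistent_play V E own g s f \<longrightarrow> parity_win0 c f)}"

text \<open>Vertices of the escape arena are of type 'v option; None is the escape vertex \<bottom>.\<close>

definition lift_edges :: "('v \<times> 'v) set \<Rightarrow> ('v option \<times> 'v option) set" where
  "lift_edges E = {(Some a, Some b) | a b. (a, b) \<in> E}"

definition Ebot :: "'v set \<Rightarrow> ('v \<times> 'v) set \<Rightarrow> ('v \<Rightarrow> nat) \<Rightarrow> ('v option \<times> 'v option) set" where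
  "Ebot V E own = lift_edges E \<union> (Some ` Vown V own 0) \<times> {None}"

definition E0 :: "'v set \<Rightarrow> ('v \<times> 'v) set \<Rightarrow> ('v \<Rightarrow> nat) \<Rightarrow> ('v option \<times> 'v option) set" where
  "E0 V E own = Ebot V E own \<inter> (Some ` Vown V own 0) \<times> UNIV"

definition E1 :: "'v set \<Rightarrow> ('v \<times> 'v) set \<Rightarrow> ('v \<Rightarrow> nat) \<Rightarrow> ('v option \<times> 'v option) set" where
  "E1 V E own = lift_edges E \<inter> (Some ` Vown V own 1) \<times> UNIV"

definition is_strategy :: "'v set \<Rightarrow> ('v \<times> 'v) set \<Rightarrow> ('v \<Rightarrow> nat) \<Rightarrow> nat \<Rightarrow> ('v option \<times> 'v option) set \<Rightarrow> bool" where
  "is_strategy V E own i \<sigma> \<longleftrightarrow> \<sigma> \<subseteq> (if i = 0 then E0 V E own else E1 V E own)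
     \<and> (\<forall>s \<in> Vown V own i. \<exists>t. (Some s, t) \<in> \<sigma>)"

definition fin_play :: "('v option \<times> 'v option) set \<Rightarrow> 'v option \<Rightarrow> 'v option list \<Rightarrow> bool" where
  "fin_play F s xs \<longleftrightarrow> xs \<noteq> [] \<and> hd xs = s \<and>
     (\<forall>i. Suc i < length xs \<longrightarrow> (xs ! i, xs ! Suc i) \<in> F) \<and> (\<forall>t. (last xs, t) \<notin> F)"

definition inf_play :: "('v option \<times> 'v option) set \<Rightarrow> 'v option \<Rightarrow> (nat \<Rightarrow> 'v option) \<Rightarrow> bool" where
  "inf_play F s f \<longleftrightarrow> f 0 = s \<and> (\<forall>i. (f i, f (Suc i)) \<in> F)"

text \<open>Profiles: -\<infinity>, vectors in \<int>^d (represented as functions nat \<Rightarrow> int, of which only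
  the coordinates < d are relevant), and \<infinity>.\<close>
datatype prof = NegInf | Fin "nat \<Rightarrow> int" | PosInf

definition unitv :: "nat \<Rightarrow> nat \<Rightarrow> int" where
  "unitv k = (\<lambda>j. if j = k then 1 else 0)"

fun prof_add :: "prof \<Rightarrow> prof \<Rightarrow> prof" where
  "prof_add (Fin a) (Fin b) = Fin (\<lambda>j. a j + b j)"
| "prof_add NegInf _ = NegInf"
| "prof_add _ NegInf = NegInf"
| "prof_add PosInf _ = PosInf"
| "prof_add _ PosInf = PosInf"

fun prof_less :: "nat \<Rightarrow> prof \<Rightarrow> prof \<Rightarrow> bool" where
  "prof_less d (Fin a) (Fin b) \<longleftrightarrow> (\<exists>k < d. a k \<noteq> b k \<and> (\<forall>j. k < j \<and> j < d \<longrightarrow> a j = b j)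
       \<and> ((even k \<and> a k < b k) \<or> (odd k \<and> a k > b k)))"
| "prof_less d NegInf q \<longleftrightarrow> q \<noteq> NegInf"
| "prof_less d p PosInf \<longleftrightarrow> p \<noteq> PosInf"
| "prof_less d _ _ \<longleftrightarrow> False"

fun prof_eq :: "nat \<Rightarrow> prof \<Rightarrow> prof \<Rightarrow> bool" where
  "prof_eq d (Fin a) (Fin b) \<longleftrightarrow> (\<forall>k < d. a k = b k)"
| "prof_eq d NegInf NegInf \<longleftrightarrow> True"
| "prof_eq d PosInf PosInf \<longleftrightarrow> True"
| "prof_eq d _ _ \<longleftrightarrow> False"

definition prof_le :: "nat \<Rightarrow> prof \<Rightarrow> prof \<Rightarrow> bool" where
  "prof_le d p q \<longleftrightarrow> prof_less d p q \<or> prof_eq d p q"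

definition pmax :: "nat \<Rightarrow> prof set \<Rightarrow> prof" where
  "pmax d S = (SOME p. p \<in> S \<and> (\<forall>q \<in> S. prof_le d q p))"

definition pmin :: "nat \<Rightarrow> prof set \<Rightarrow> prof" where
  "pmin d S = (SOME p. p \<in> S \<and> (\<forall>q \<in> S. prof_le d p q))"

definition fin_prof :: "('v \<Rightarrow> nat) \<Rightarrow> 'v option list \<Rightarrow> prof" where
  "fin_prof c xs = Fin (\<lambda>j. (\<Sum>x \<leftarrow> xs. case x of None \<Rightarrow> 0 | Some v \<Rightarrow> unitv (c v) j))"

definition inf_prof :: "('v \<Rightarrow> nat) \<Rightarrow> (nat \<Rightarrow> 'v option) \<Rightarrow> prof" where
  "inf_prof c f = (if parity_win0 c (\<lambda>i. the (f i)) then PosInf else NegInf)"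

definition play_profiles :: "('v \<Rightarrow> nat) \<Rightarrow> ('v option \<times> 'v option) set \<Rightarrow> 'v option \<Rightarrow> prof set" where
  "play_profiles c F s = {fin_prof c xs | xs. fin_play F s xs} \<union> {inf_prof c f | f. inf_play F s f}"

definition valuation :: "'v set \<Rightarrow> ('v \<times> 'v) set \<Rightarrow> ('v \<Rightarrow> nat) \<Rightarrow> ('v \<Rightarrow> nat) \<Rightarrow> nat
    \<Rightarrow> ('v option \<times> 'v option) set \<Rightarrow> 'v option \<Rightarrow> prof" where
  "valuation V E own c d \<sigma> s = (if s = None then Fin (\<lambda>_. 0) else
     pmin d {pmax d (play_profiles c (\<sigma> \<union> \<tau>) s) | \<tau>. is_strategy V E own 1 \<tau>})"

text \<open>\<sigma> is reasonable iff the graph with edges \<sigma> \<union> E_1 has no 1-dominated cycle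
  (cycles cannot pass through \<bottom>, which has no successors).\<close>
definition reasonable :: "'v set \<Rightarrow> ('v \<times> 'v) set \<Rightarrow> ('v \<Rightarrow> nat) \<Rightarrow> ('v \<Rightarrow> nat)
    \<Rightarrow> ('v option \<times> 'v option) set \<Rightarrow> bool" where
  "reasonable V E own c \<sigma> \<longleftrightarrow>
     \<not> (\<exists>xs. is_cycle {(a, b). (Some a, Some b) \<in> \<sigma> \<union> E1 V E own} xs \<and> dominated c 1 xs)"

definition improvements :: "'v set \<Rightarrow> ('v \<times> 'v) set \<Rightarrow> ('v \<Rightarrow> nat) \<Rightarrow> ('v \<Rightarrow> nat) \<Rightarrow> nat
    \<Rightarrow> ('v option \<times> 'v option) set \<Rightarrow> ('v option \<times> 'v option) set" where
  "improvements V E own c d \<sigma> = {(s, t) \<in> E0 V E own.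
      prof_le d (valuation V E own c d \<sigma> s)
        (prof_add (Fin (unitv (c (the s)))) (valuation V E own c d \<sigma> t))}"

definition strict_improvements :: "'v set \<Rightarrow> ('v \<times> 'v) set \<Rightarrow> ('v \<Rightarrow> nat) \<Rightarrow> ('v \<Rightarrow> nat) \<Rightarrow> nat
    \<Rightarrow> ('v option \<times> 'v option) set \<Rightarrow> ('v option \<times> 'v option) set" where
  "strict_improvements V E own c d \<sigma> = {(s, t) \<in> E0 V E own.
      prof_less d (valuation V E own c d \<sigma> s)
        (prof_add (Fin (unitv (c (the s)))) (valuation V E own c d \<sigma> t))}"

definition sigma_iter :: "'v set \<Rightarrow> ('v \<times> 'v) set \<Rightarrow> ('v \<Rightarrow> nat) \<Rightarrow> ('v \<Rightarrow> nat) \<Rightarrow> nat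
    \<Rightarrow> nat \<Rightarrow> ('v option \<times> 'v option) set" where
  "sigma_iter V E own c d i = (improvements V E own c d ^^ i) ((Some ` Vown V own 0) \<times> {None})"

definition wins_with :: "'v set \<Rightarrow> ('v \<times> 'v) set \<Rightarrow> ('v \<Rightarrow> nat) \<Rightarrow> ('v \<Rightarrow> nat)
    \<Rightarrow> ('v option \<times> 'v option) set \<Rightarrow> 'v \<Rightarrow> bool" where
  "wins_with V E own c \<sigma> s \<longleftrightarrow> (\<exists>\<sigma>'. \<sigma>' \<subseteq> \<sigma> \<and> is_strategy V E own 0 \<sigma>' \<and>
     (\<forall>\<tau>. is_strategy V E own 1 \<tau> \<longrightarrow>
        (\<forall>xs. \<not> fin_play (\<sigma>' \<union> \<tau>) (Some s) xs) \<and>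
        (\<forall>f. inf_play (\<sigma>' \<union> \<tau>) (Some s) f \<longrightarrow> inf_prof c f = PosInf)))"

definition optimal_winning :: "'v set \<Rightarrow> ('v \<times> 'v) set \<Rightarrow> ('v \<Rightarrow> nat) \<Rightarrow> ('v \<Rightarrow> nat)
    \<Rightarrow> ('v option \<times> 'v option) set \<Rightarrow> bool" where
  "optimal_winning V E own c \<sigma> \<longleftrightarrow> (\<forall>s \<in> W0 V E own c. wins_with V E own c \<sigma> s)"

end

theory Submission
  imports Defs "HOL-Library.Infinite_Set"
begin

lemma pl_fin_iff: "prof_less d (Fin a) (Fin b) \<longleftrightarrow> (\<exists>k < d. a k \<noteq> b k \<and> (\<forall>j. k < j \<and> j < d \<longrightarrow> a j = b j)
       \<and> ((even k \<and> a k < b k) \<or> (odd k \<and> a k > b k)))"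
  by simp

lemma pl_asym_fin:
  assumes "prof_less d (Fin a) (Fin b)" "prof_less d (Fin b) (Fin a)" shows False
proof -
  from assms(1) obtain k1 where k1: "k1 < d" "a k1 \<noteq> b k1" "\<forall>j. k1 < j \<and> j < d \<longrightarrow> a j = b j"
     "(even k1 \<and> a k1 < b k1) \<or> (odd k1 \<and> a k1 > b k1)" by auto
  from assms(2) obtain k2 where k2: "k2 < d" "b k2 \<noteq> a k2" "\<forall>j. k2 < j \<and> j < d \<longrightarrow> b j = a j"
     "(even k2 \<and> b k2 < a k2) \<or> (odd k2 \<and> b k2 > a k2)" by auto
  consider "k1 < k2" | "k1 = k2" | "k2 < k1" by linarith
  then show False
  proof cases
    case 1 then show ?thesis using k1 k2 by auto
  next
    case 2 then show ?thesis using k1 k2 by auto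
  next
    case 3 then show ?thesis using k1 k2 by auto
  qed
qed

lemma pl_asym: assumes "prof_less d p q" shows "\<not> prof_less d q p"
proof (cases "\<exists>a b. p = Fin a \<and> q = Fin b")
  case True then show ?thesis using pl_asym_fin assms by blast
next
  case False then show ?thesis using assms by (cases p; cases q) auto
qed

lemma pl_irrefl: "\<not> prof_less d p p"
  using pl_asym by blast

lemma pl_trans_fin:
  assumes "prof_less d (Fin a) (Fin b)" "prof_less d (Fin b) (Fin c)" shows "prof_less d (Fin a) (Fin c)"
proof -
  from assms(1) obtain k1 where k1: "k1 < d" "a k1 \<noteq> b k1" "\<forall>j. k1 < j \<and> j < d \<longrightarrow> a j = b j"
     "(even k1 \<and> a k1 < b k1) \<or> (odd k1 \<and> a k1 > b k1)" by auto
  from assms(2) obtain k2 where k2: "k2 < d" "b k2 \<noteq> c k2" "\<forall>j. k2 < j \<and> j < d \<longrightarrow> b j = c j"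
     "(even k2 \<and> b k2 < c k2) \<or> (odd k2 \<and> b k2 > c k2)" by auto
  consider "k1 < k2" | "k1 = k2" | "k2 < k1" by linarith
  then show ?thesis
  proof cases
    case 1
    have "a k2 = b k2" using k1 1 k2 by auto
    then show ?thesis using k1 k2 1 unfolding pl_fin_iff
      by (intro exI[of _ k2]) auto
  next
    case 2
    then show ?thesis using k1 k2 unfolding pl_fin_iff
      by (intro exI[of _ k2]) auto
  next
    case 3
    have "b k1 = c k1" using k2 3 k1 by auto
    then show ?thesis using k1 k2 3 unfolding pl_fin_iff
      by (intro exI[of _ k1]) auto
  qed
qed

lemma pl_trans: assumes "prof_less d p q" "prof_less d q r" shows "prof_less d p r"
proof (cases "\<exists>a b e. p = Fin a \<and> q = Fin b \<and> r = Fin e")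
  case True then show ?thesis using pl_trans_fin assms by blast
next
  case False then show ?thesis using assms by (cases p; cases q; cases r) auto
qed

lemma peq_refl: "prof_eq d p p" by (cases p) auto
lemma peq_sym: "prof_eq d p q \<Longrightarrow> prof_eq d q p" by (cases p; cases q) auto
lemma peq_trans: "prof_eq d p q \<Longrightarrow> prof_eq d q r \<Longrightarrow> prof_eq d p r" by (cases p; cases q; cases r) auto

lemma pl_eq_left: "prof_eq d p p' \<Longrightarrow> prof_less d p q \<longleftrightarrow> prof_less d p' q"
  apply (cases p; cases p'; cases q; simp)
  apply (rule iffI; elim exE; rule_tac x=k in exI; auto)
  done

lemma pl_eq_right: "prof_eq d q q' \<Longrightarrow> prof_less d p q \<longleftrightarrow> prof_less d p q'"
  apply (cases p; cases q'; cases q; simp)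
  apply (rule iffI; elim exE; rule_tac x=k in exI; auto)
  done

lemma peq_not_less: "prof_eq d p q \<Longrightarrow> \<not> prof_less d p q"
  using pl_eq_right pl_irrefl peq_sym by metis

lemma pl_total_fin: "prof_less d (Fin a) (Fin b) \<or> prof_eq d (Fin a) (Fin b) \<or> prof_less d (Fin b) (Fin a)"
proof (cases "\<forall>k<d. a k = b k")
  case True then show ?thesis by simp
next
  case False
  define K where "K = {k. k < d \<and> a k \<noteq> b k}"
  have fK: "finite K" "K \<noteq> {}" using False unfolding K_def by auto
  define k where "k = Max K"
  have kK: "k \<in> K" using fK unfolding k_def by simp
  have above: "\<forall>j. k < j \<and> j < d \<longrightarrow> a j = b j"
    using fK unfolding k_def K_def by (metis (mono_tags, lifting) Max_ge mem_Collect_eq not_le)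
  show ?thesis
  proof (cases "(even k \<and> a k < b k) \<or> (odd k \<and> a k > b k)")
    case True then show ?thesis using kK above unfolding K_def by (auto intro!: exI[of _ k])
  next
    case F: False
    have "(even k \<and> b k < a k) \<or> (odd k \<and> b k > a k)" using F kK unfolding K_def by auto
    then have "prof_less d (Fin b) (Fin a)" using kK above unfolding K_def pl_fin_iff
      by (intro exI[of _ k]) auto
    then show ?thesis by simp
  qed
qed

lemma pl_total: "prof_less d p q \<or> prof_eq d p q \<or> prof_less d q p"
proof (cases "\<exists>a b. p = Fin a \<and> q = Fin b")
  case True then show ?thesis using pl_total_fin by blast
next
  case False then show ?thesis by (cases p; cases q) auto
qed

lemma ple_refl: "prof_le d p p" unfolding prof_le_def using peq_refl by auto

lemma ple_trans: "prof_le d p q \<Longrightarrow> prof_le d q r \<Longrightarrow> prof_le d p r"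
  unfolding prof_le_def using pl_trans pl_eq_left pl_eq_right peq_trans peq_sym by metis

lemma ple_less_trans: "prof_le d p q \<Longrightarrow> prof_less d q r \<Longrightarrow> prof_less d p r"
  unfolding prof_le_def using pl_trans pl_eq_left peq_sym by metis

lemma pless_le_trans: "prof_less d p q \<Longrightarrow> prof_le d q r \<Longrightarrow> prof_less d p r"
  unfolding prof_le_def using pl_trans pl_eq_right by metis

lemma ple_total: "prof_le d p q \<or> prof_le d q p"
  unfolding prof_le_def using pl_total peq_sym by metis

lemma ple_antisym: "prof_le d p q \<Longrightarrow> prof_le d q p \<Longrightarrow> prof_eq d p q"
  unfolding prof_le_def using pl_asym pl_eq_left pl_irrefl by metis

lemma not_ple: "\<not> prof_le d p q \<longleftrightarrow> prof_less d q p"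
  unfolding prof_le_def using pl_total pl_asym peq_sym peq_not_less by metis

lemma ple_eq_left: "prof_eq d p p' \<Longrightarrow> prof_le d p q \<longleftrightarrow> prof_le d p' q"
  unfolding prof_le_def using pl_eq_left peq_trans peq_sym by metis

lemma ple_eq_right: "prof_eq d q q' \<Longrightarrow> prof_le d p q \<longleftrightarrow> prof_le d p q'"
  unfolding prof_le_def using pl_eq_right peq_trans peq_sym by metis


lemma padd_less: "prof_less d (prof_add (Fin u) p) (prof_add (Fin u) q) \<longleftrightarrow> prof_less d p q"
  by (cases p; cases q) auto

lemma padd_eq: "prof_eq d (prof_add (Fin u) p) (prof_add (Fin u) q) \<longleftrightarrow> prof_eq d p q"
  by (cases p; cases q) auto

lemma padd_le: "prof_le d (prof_add (Fin u) p) (prof_add (Fin u) q) \<longleftrightarrow> prof_le d p q"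
  unfolding prof_le_def using padd_less padd_eq by blast

lemma padd_zero: "prof_add (Fin u) (Fin (\<lambda>_. 0)) = Fin u" by simp

definition hasmax :: "nat \<Rightarrow> prof set \<Rightarrow> prof \<Rightarrow> bool" where
  "hasmax d S m \<longleftrightarrow> m \<in> S \<and> (\<forall>q\<in>S. prof_le d q m)"
definition hasmin :: "nat \<Rightarrow> prof set \<Rightarrow> prof \<Rightarrow> bool" where
  "hasmin d S m \<longleftrightarrow> m \<in> S \<and> (\<forall>q\<in>S. prof_le d m q)"

lemma pmax_hasmax: "hasmax d S m \<Longrightarrow> hasmax d S (pmax d S)"
  unfolding pmax_def hasmax_def by (rule someI)
lemma pmin_hasmin: "hasmin d S m \<Longrightarrow> hasmin d S (pmin d S)"
  unfolding pmin_def hasmin_def by (rule someI)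

lemma hasmax_unique: "hasmax d S m \<Longrightarrow> hasmax d S m' \<Longrightarrow> prof_eq d m m'"
  unfolding hasmax_def using ple_antisym by blast
lemma hasmin_unique: "hasmin d S m \<Longrightarrow> hasmin d S m' \<Longrightarrow> prof_eq d m m'"
  unfolding hasmin_def using ple_antisym by blast

lemma finite_hasmax: "finite S \<Longrightarrow> S \<noteq> {} \<Longrightarrow> \<exists>m. hasmax d S m"
proof (induction S rule: finite_ne_induct)
  case (singleton x) then show ?case unfolding hasmax_def using ple_refl by auto
next
  case (insert x F)
  then obtain m where m: "hasmax d F m" by blast
  show ?case
  proof (cases "prof_le d x m")
    case True then show ?thesis using m unfolding hasmax_def by auto
  next
    case False then have mx: "prof_le d m x" using ple_total by blast
    have "\<forall>q\<in>insert x F. prof_le d q x"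
    proof
      fix q assume "q \<in> insert x F"
      then show "prof_le d q x"
      proof
        assume "q = x" then show ?thesis using ple_refl by simp
      next
        assume "q \<in> F" then have "prof_le d q m" using m unfolding hasmax_def by auto
        then show ?thesis using mx ple_trans by blast
      qed
    qed
    then show ?thesis unfolding hasmax_def by blast
  qed
qed

lemma finite_hasmin: "finite S \<Longrightarrow> S \<noteq> {} \<Longrightarrow> \<exists>m. hasmin d S m"
proof (induction S rule: finite_ne_induct)
  case (singleton x) then show ?case unfolding hasmin_def using ple_refl by auto
next
  case (insert x F)
  then obtain m where m: "hasmin d F m" by blast
  show ?case
  proof (cases "prof_le d m x")
    case True then show ?thesis using m unfolding hasmin_def by auto
  next
    case False then have mx: "prof_le d x m" using ple_total by blast
    have "\<forall>q\<in>insert x F. prof_le d x q"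
    proof
      fix q assume "q \<in> insert x F"
      then show "prof_le d x q"
      proof
        assume "q = x" then show ?thesis using ple_refl by simp
      next
        assume "q \<in> F" then have "prof_le d m q" using m unfolding hasmin_def by auto
        then show ?thesis using mx ple_trans by blast
      qed
    qed
    then show ?thesis unfolding hasmin_def by blast
  qed
qed

lemma hasmax_add: "hasmax d S m \<Longrightarrow> hasmax d (prof_add (Fin u) ` S) (prof_add (Fin u) m)"
  unfolding hasmax_def using padd_le by blast

lemma hasmax_Un1: assumes "hasmax d A a" "hasmax d B b" "prof_le d a b"
  shows "hasmax d (A \<union> B) b"
proof -
  have "\<forall>q\<in>A. prof_le d q b" using assms ple_trans unfolding hasmax_def by blast
  then show ?thesis using assms(2) unfolding hasmax_def by blast
qed

lemma hasmax_Un: assumes "hasmax d A a" "hasmax d B b"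
  shows "hasmax d (A \<union> B) (if prof_le d a b then b else a)"
proof (cases "prof_le d a b")
  case True then show ?thesis using hasmax_Un1 assms by simp
next
  case False then have "prof_le d b a" using ple_total by blast
  then show ?thesis using hasmax_Un1[OF assms(2,1)] False by (simp add: Un_commute)
qed

lemma hasmax_eq: "hasmax d S m \<Longrightarrow> prof_eq d (pmax d S) m"
  using pmax_hasmax hasmax_unique by blast

lemma mono_resp_eq:
  assumes "\<And>p q. prof_le d p q \<Longrightarrow> prof_le d (h p) (h q)" "prof_eq d p q"
  shows "prof_eq d (h p) (h q)"
proof -
  have "prof_le d p q" "prof_le d q p" using assms(2) peq_sym unfolding prof_le_def by blast+
  then show ?thesis using assms(1) ple_antisym by blast
qed

lemma pmin_image_mono:
  assumes fin: "finite T" "T \<noteq> {}"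
    and mono: "\<And>p q. prof_le d p q \<Longrightarrow> prof_le d (h p) (h q)"
    and fg: "\<And>t. t \<in> T \<Longrightarrow> prof_eq d (f t) (h (g t))"
  shows "prof_eq d (pmin d (f ` T)) (h (pmin d (g ` T)))"
proof -
  obtain a where a: "hasmin d (f ` T) a" using finite_hasmin fin by (metis finite_imageI image_is_empty)
  obtain b where b: "hasmin d (g ` T) b" using finite_hasmin fin by (metis finite_imageI image_is_empty)
  have pa: "hasmin d (f ` T) (pmin d (f ` T))" using pmin_hasmin a by blast
  have pb: "hasmin d (g ` T) (pmin d (g ` T))" using pmin_hasmin b by blast
  obtain t1 where t1: "t1 \<in> T" "pmin d (f ` T) = f t1" using pa unfolding hasmin_def by auto
  obtain t2 where t2: "t2 \<in> T" "pmin d (g ` T) = g t2" using pb unfolding hasmin_def by auto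
  have "prof_le d (pmin d (g ` T)) (g t1)" using pb t1 unfolding hasmin_def by auto
  then have 1: "prof_le d (h (pmin d (g ` T))) (h (g t1))" using mono by blast
  have 2: "prof_le d (h (g t1)) (pmin d (f ` T))" using fg[OF t1(1)] t1(2) peq_sym unfolding prof_le_def by metis
  have 3: "prof_le d (pmin d (f ` T)) (f t2)" using pa t2 unfolding hasmin_def by auto
  have 4: "prof_le d (f t2) (h (pmin d (g ` T)))" using fg[OF t2(1)] t2(2) unfolding prof_le_def by metis
  show ?thesis using 1 2 3 4 ple_trans ple_antisym by metis
qed


definition infc :: "('v \<Rightarrow> nat) \<Rightarrow> (nat \<Rightarrow> 'v) \<Rightarrow> nat set" where
  "infc c g = {k. \<exists>\<^sub>\<infinity>i. c (g i) = k}"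

lemma parity_infc: "parity_win0 c g \<longleftrightarrow> even (Max (infc c g))"
  unfolding parity_win0_def infc_def by simp

lemma INFM_shift: "(\<exists>\<^sub>\<infinity>i. P (i + k)) \<longleftrightarrow> (\<exists>\<^sub>\<infinity>i::nat. P i)"
  unfolding INFM_nat_le
proof
  assume a: "\<forall>m. \<exists>n\<ge>m. P (n + k)"
  show "\<forall>m. \<exists>n\<ge>m. P n"
  proof
    fix m obtain n where "n \<ge> m" "P (n + k)" using a by blast
    then show "\<exists>n\<ge>m. P n" by (intro exI[of _ "n+k"]) auto
  qed
next
  assume a: "\<forall>m. \<exists>n\<ge>m. P n"
  show "\<forall>m. \<exists>n\<ge>m. P (n + k)"
  proof
    fix m obtain n where "n \<ge> m + k" "P n" using a by blast
    then show "\<exists>n\<ge>m. P (n + k)" by (intro exI[of _ "n-k"]) auto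
  qed
qed

lemma infc_shift: "infc c (\<lambda>i. g (i + k)) = infc c g"
  unfolding infc_def using INFM_shift[where P="\<lambda>i. c (g i) = _"] by simp

lemma infc_Suc: "infc c (\<lambda>i. g (Suc i)) = infc c g"
  using infc_shift[of c g 1] by simp

lemma infc_prefix: "infc c (\<lambda>n. if n < k then a n else g (n - k)) = infc c g"
proof -
  have "infc c (\<lambda>n. if n < k then a n else g (n - k)) = infc c (\<lambda>i. (\<lambda>n. if n < k then a n else g (n - k)) (i + k))"
    by (rule infc_shift[symmetric])
  also have "\<dots> = infc c g" by simp
  finally show ?thesis .
qed

lemma limmax_char:
  assumes fin: "finite (range (\<lambda>i. c (g i)))"
    and N: "\<forall>n\<ge>N. c (g n) \<le> M" and occ: "\<forall>N. \<exists>n\<ge>N. c (g n) = M"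
  shows "Max (infc c g) = M"
proof -
  have Min: "M \<in> infc c g" unfolding infc_def using occ by (simp add: INFM_nat_le)
  have sub: "infc c g \<subseteq> range (\<lambda>i. c (g i))" unfolding infc_def using INFM_EX by blast
  have le: "k \<le> M" if "k \<in> infc c g" for k
  proof -
    from that obtain n where "n \<ge> N" "c (g n) = k" unfolding infc_def INFM_nat_le by blast
    then show ?thesis using N by auto
  qed
  show ?thesis using Min le sub fin by (meson Max_eqI finite_subset)
qed

lemma limmax_props:
  assumes fin: "finite (range (\<lambda>i. c (g i)))"
  shows "\<exists>N. \<forall>n\<ge>N. c (g n) \<le> Max (infc c g)" "\<forall>N. \<exists>n\<ge>N. c (g n) = Max (infc c g)"
    "Max (infc c g) \<in> range (\<lambda>i. c (g i))"
proof -
  let ?S = "range (\<lambda>i. c (g i))"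
  have sub: "infc c g \<subseteq> ?S" unfolding infc_def using INFM_EX by blast
  have "\<exists>\<^sub>\<infinity>y. \<exists>k\<in>?S. c (g y) = k" by simp
  then have "\<exists>k\<in>?S. \<exists>\<^sub>\<infinity>y. c (g y) = k" using INFM_finite_Bex_distrib[OF fin, where P="\<lambda>k y. c (g y) = k"] by simp
  then have ne: "infc c g \<noteq> {}" unfolding infc_def by blast
  have finI: "finite (infc c g)" using sub fin finite_subset by blast
  define M where "M = Max (infc c g)"
  have MI: "M \<in> infc c g" using ne finI unfolding M_def by simp
  then show "\<forall>N. \<exists>n\<ge>N. c (g n) = Max (infc c g)" unfolding M_def infc_def INFM_nat_le by simp
  show "Max (infc c g) \<in> ?S" using MI sub M_def by blast
  have "\<forall>k\<in>?S. M < k \<longrightarrow> (\<forall>\<^sub>\<infinity>y. c (g y) \<noteq> k)"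
  proof (intro ballI impI)
    fix k assume "k \<in> ?S" "M < k"
    then have "k \<notin> infc c g" using finI unfolding M_def by (meson Max_ge not_le)
    then show "\<forall>\<^sub>\<infinity>y. c (g y) \<noteq> k" unfolding infc_def by (simp add: not_frequently)
  qed
  then have "\<forall>k\<in>?S. \<forall>\<^sub>\<infinity>y. M < k \<longrightarrow> c (g y) \<noteq> k" by simp
  then have "\<forall>\<^sub>\<infinity>y. \<forall>k\<in>?S. M < k \<longrightarrow> c (g y) \<noteq> k" using MOST_finite_Ball_distrib[OF fin, where P="\<lambda>k y. M < k \<longrightarrow> c (g y) \<noteq> k"] by simp
  then have "\<forall>\<^sub>\<infinity>y. c (g y) \<le> M" by (rule MOST_mono) (metis (mono_tags, lifting) not_le rangeI)
  then show "\<exists>N. \<forall>n\<ge>N. c (g n) \<le> Max (infc c g)" unfolding MOST_nat_le M_def by blast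
qed

section \<open>Concatenation of infinitely many nonempty lists\<close>

definition st :: "(nat \<Rightarrow> 'a list) \<Rightarrow> nat \<Rightarrow> nat" where
  "st L k = (\<Sum>j<k. length (L j))"

definition sg :: "(nat \<Rightarrow> 'a list) \<Rightarrow> nat \<Rightarrow> nat" where
  "sg L n = (LEAST k. n < st L (Suc k))"

definition conc :: "(nat \<Rightarrow> 'a list) \<Rightarrow> nat \<Rightarrow> 'a" where
  "conc L n = L (sg L n) ! (n - st L (sg L n))"

context
  fixes L :: "nat \<Rightarrow> 'a list"
  assumes ne: "\<And>k. L k \<noteq> []"
begin

lemma st_Suc: "st L (Suc k) = st L k + length (L k)"
  unfolding st_def by simp

lemma st_ge: "k \<le> st L k"
proof (induction k)
  case (Suc k)
  have "length (L k) \<ge> 1" using ne[of k] by (cases "L k") auto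
  then show ?case using st_Suc Suc by simp
qed simp

lemma st_mono: "i \<le> j \<Longrightarrow> st L i \<le> st L j"
  unfolding st_def by (intro sum_mono2) auto

lemma sg_props: "st L (sg L n) \<le> n" "n < st L (Suc (sg L n))"
proof -
  have ex: "n < st L (Suc n)" using st_ge[of "Suc n"] by simp
  show 2: "n < st L (Suc (sg L n))" unfolding sg_def by (rule LeastI[of _ n], fact ex)
  show "st L (sg L n) \<le> n"
  proof (cases "sg L n")
    case 0 then show ?thesis by (simp add: st_def)
  next
    case (Suc m)
    have "\<not> n < st L (Suc m)"
    proof
      assume "n < st L (Suc m)"
      then have "sg L n \<le> m" unfolding sg_def by (rule Least_le)
      then show False using Suc by simp
    qed
    then show ?thesis using Suc by simp
  qed
qed

lemma sg_unique: "st L k \<le> n \<Longrightarrow> n < st L (Suc k) \<Longrightarrow> sg L n = k"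
proof -
  assume a: "st L k \<le> n" "n < st L (Suc k)"
  have s: "st L (sg L n) \<le> n" "n < st L (Suc (sg L n))" using sg_props by auto
  show "sg L n = k"
  proof (rule ccontr)
    assume "sg L n \<noteq> k"
    then consider "sg L n < k" | "k < sg L n" by linarith
    then show False
    proof cases
      case 1 then have "st L (Suc (sg L n)) \<le> st L k" using st_mono by simp
      then show False using a s by linarith
    next
      case 2 then have "st L (Suc k) \<le> st L (sg L n)" using st_mono by simp
      then show False using a s by linarith
    qed
  qed
qed

lemma conc_at: "i < length (L k) \<Longrightarrow> conc L (st L k + i) = L k ! i"
proof -
  assume i: "i < length (L k)"
  have "sg L (st L k + i) = k" using i by (intro sg_unique) (auto simp: st_Suc)
  then show ?thesis unfolding conc_def by simp
qed

lemma conc_0: "conc L 0 = hd (L 0)"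
  using conc_at[of 0 0] ne[of 0] by (simp add: st_def hd_conv_nth)

lemma conc_in: "\<exists>k i. i < length (L k) \<and> n = st L k + i"
  using sg_props[of n] st_Suc by (intro exI[of _ "sg L n"] exI[of _ "n - st L (sg L n)"]) auto

lemma conc_edges:
  assumes inner: "\<And>k i. Suc i < length (L k) \<Longrightarrow> R (L k ! i) (L k ! Suc i)"
    and link: "\<And>k. R (last (L k)) (hd (L (Suc k)))"
  shows "R (conc L n) (conc L (Suc n))"
proof -
  obtain k i where ki: "i < length (L k)" "n = st L k + i" using conc_in by blast
  show ?thesis
  proof (cases "Suc i < length (L k)")
    case True
    then show ?thesis using ki conc_at[of i k] conc_at[of "Suc i" k] inner[OF True] by simp
  next
    case False
    then have i: "i = length (L k) - 1" using ki by simp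
    have "Suc n = st L (Suc k) + 0" using ki i st_Suc ne[of k] by (simp add: length_greater_0_conv)
    then have "conc L (Suc n) = hd (L (Suc k))" using conc_at[of 0 "Suc k"] ne[of "Suc k"]
      by (simp add: hd_conv_nth length_greater_0_conv)
    moreover have "conc L n = last (L k)" using ki i conc_at[of i k] ne[of k] by (simp add: last_conv_nth)
    ultimately show ?thesis using link by simp
  qed
qed

lemma conc_range: "conc L n \<in> (\<Union>k. set (L k))"
proof -
  obtain k i where ki: "i < length (L k)" "n = st L k + i" using conc_in by blast
  then show ?thesis using conc_at nth_mem by fastforce
qed

lemma conc_parity:
  assumes fin: "finite (range (\<lambda>n. c (conc L n)))"
    and Q: "\<And>k. k \<ge> K \<Longrightarrow> Q (Max (c ` set (L k)))"
  shows "Q (Max (infc c (conc L)))"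
proof -
  let ?M = "Max (infc c (conc L))"
  obtain N where N: "\<forall>n\<ge>N. c (conc L n) \<le> ?M" using limmax_props(1)[of c "conc L", OF fin] by blast
  obtain n where n: "n \<ge> st L (N + K)" "c (conc L n) = ?M" using limmax_props(2)[of c "conc L", OF fin] by blast
  define k where "k = sg L n"
  have kb: "st L k \<le> n" "n < st L (Suc k)" using sg_props k_def by auto
  have kNK: "k \<ge> N + K"
  proof (rule ccontr)
    assume "\<not> k \<ge> N + K" then have "Suc k \<le> N + K" by simp
    then have "st L (Suc k) \<le> st L (N + K)" using st_mono by blast
    then show False using n kb by linarith
  qed
  have seg: "\<forall>x\<in>set (L k). c x \<le> ?M"
  proof
    fix x assume "x \<in> set (L k)"
    then obtain i where i: "i < length (L k)" "x = L k ! i" by (metis in_set_conv_nth)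
    have "st L k + i \<ge> N" using st_ge[of k] kNK by linarith
    then show "c x \<le> ?M" using N conc_at[OF i(1)] i by metis
  qed
  have inseg: "conc L n \<in> set (L k)"
    using conc_at[of "n - st L k" k] kb st_Suc by (simp add: nth_mem)
  have "Max (c ` set (L k)) = ?M"
    using seg inseg n(2) by (intro Max_eqI) (auto intro: rev_image_eqI)
  then show ?thesis using Q[of k] kNK by simp
qed

end


lemma fin_prof_Cons: "fin_prof c (Some v # ys) = prof_add (Fin (unitv (c v))) (fin_prof c ys)"
  unfolding fin_prof_def by simp

lemma fin_prof_None: "fin_prof c [None] = Fin (\<lambda>_. 0)"
  unfolding fin_prof_def by simp

lemma inf_prof_Suc: "inf_prof c f = prof_add (Fin u) (inf_prof c (\<lambda>n. f (Suc n)))"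
proof -
  have "parity_win0 c (\<lambda>i. the (f (Suc i))) = parity_win0 c (\<lambda>i. the (f i))"
    unfolding parity_infc using infc_Suc[of c "\<lambda>i. the (f i)"] by simp
  then show ?thesis unfolding inf_prof_def by auto
qed

lemma fin_play_Cons:
  "ys \<noteq> [] \<Longrightarrow> fin_play F x (x # ys) \<longleftrightarrow> (x, hd ys) \<in> F \<and> fin_play F (hd ys) ys"
  unfolding fin_play_def
  apply (cases ys)
   apply simp
  apply (auto simp: nth_Cons split: nat.splits)
  done

lemma fin_play_hd: "fin_play F x xs \<Longrightarrow> \<exists>ys. xs = x # ys"
  unfolding fin_play_def by (cases xs) auto

lemma fin_play_single: "fin_play F x [x] \<longleftrightarrow> (\<forall>t. (x, t) \<notin> F)"
  unfolding fin_play_def by auto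

lemma inf_play_Suc: "inf_play F x f \<Longrightarrow> (x, f (Suc 0)) \<in> F \<and> inf_play F (f (Suc 0)) (\<lambda>n. f (Suc n))"
  unfolding inf_play_def by metis

lemma inf_play_Cons: "(x, t) \<in> F \<Longrightarrow> inf_play F t g \<Longrightarrow> inf_play F x (case_nat x g)"
  unfolding inf_play_def by (auto split: nat.splits)

lemma PP_None:
  assumes "\<And>t. (None, t) \<notin> F"
  shows "play_profiles c F None = {Fin (\<lambda>_. 0)}"
proof -
  have "fin_play F None xs \<longleftrightarrow> xs = [None]" for xs
  proof
    assume a: "fin_play F None xs"
    then obtain ys where xs: "xs = None # ys" using fin_play_hd by blast
    show "xs = [None]"
    proof (cases ys)
      case Nil then show ?thesis using xs by simp
    next
      case (Cons y ys')
      then have "(None, y) \<in> F" using a xs fin_play_Cons[of ys F None] by simp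
      then show ?thesis using assms by blast
    qed
  next
    assume "xs = [None]" then show "fin_play F None xs" using assms fin_play_single by blast
  qed
  moreover have "\<not> inf_play F None f" for f using assms unfolding inf_play_def by metis
  ultimately have "{fin_prof c xs |xs. fin_play F None xs} = {Fin (\<lambda>_. 0)}"
     "{inf_prof c f |f. inf_play F None f} = {}" using fin_prof_None by auto
  then show ?thesis unfolding play_profiles_def by simp
qed

lemma PP_finI: "fin_play F x xs \<Longrightarrow> fin_prof c xs \<in> play_profiles c F x"
  unfolding play_profiles_def by blast
lemma PP_infI: "inf_play F x f \<Longrightarrow> inf_prof c f \<in> play_profiles c F x"
  unfolding play_profiles_def by blast
lemma PP_cases: "p \<in> play_profiles c F x \<Longrightarrow>
   (\<And>xs. fin_play F x xs \<Longrightarrow> p = fin_prof c xs \<Longrightarrow> P) \<Longrightarrow>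
   (\<And>f. inf_play F x f \<Longrightarrow> p = inf_prof c f \<Longrightarrow> P) \<Longrightarrow> P"
  unfolding play_profiles_def by blast

lemma PP_step:
  assumes ne: "\<exists>t. (Some v, t) \<in> F"
  shows "play_profiles c F (Some v) =
     (\<Union>t\<in>{t. (Some v, t) \<in> F}. prof_add (Fin (unitv (c v))) ` play_profiles c F t)"
    (is "?L = ?R")
proof
  show "?L \<subseteq> ?R"
  proof
    fix p assume "p \<in> ?L"
    then consider xs where "fin_play F (Some v) xs" "p = fin_prof c xs"
      | f where "inf_play F (Some v) f" "p = inf_prof c f" by (rule PP_cases) blast+
    then show "p \<in> ?R"
    proof cases
      case 1
      then obtain ys where xs: "xs = Some v # ys" using fin_play_hd by blast
      have "ys \<noteq> []" using 1 xs ne fin_play_single by blast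
      then have "(Some v, hd ys) \<in> F" "fin_play F (hd ys) ys" using 1 xs fin_play_Cons by blast+
      then have "fin_prof c ys \<in> play_profiles c F (hd ys)" using PP_finI by blast
      moreover have "p = prof_add (Fin (unitv (c v))) (fin_prof c ys)" using 1 xs fin_prof_Cons by simp
      ultimately have "p \<in> prof_add (Fin (unitv (c v))) ` play_profiles c F (hd ys)" by blast
      then show ?thesis using \<open>(Some v, hd ys) \<in> F\<close> by blast
    next
      case 2
      then have "(Some v, f (Suc 0)) \<in> F" "inf_play F (f (Suc 0)) (\<lambda>n. f (Suc n))" using inf_play_Suc by blast+
      then have "inf_prof c (\<lambda>n. f (Suc n)) \<in> play_profiles c F (f (Suc 0))" using PP_infI by blast
      then show ?thesis using 2 inf_prof_Suc[of c f "unitv (c v)"] \<open>(Some v, f (Suc 0)) \<in> F\<close> by auto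
    qed
  qed
next
  show "?R \<subseteq> ?L"
  proof
    fix p assume "p \<in> ?R"
    then obtain t q where t: "(Some v, t) \<in> F" "q \<in> play_profiles c F t" "p = prof_add (Fin (unitv (c v))) q" by blast
    from t(2) consider xs where "fin_play F t xs" "q = fin_prof c xs"
      | f where "inf_play F t f" "q = inf_prof c f" by (rule PP_cases) blast+
    then show "p \<in> ?L"
    proof cases
      case 1
      then obtain ys where xs: "xs = t # ys" using fin_play_hd by blast
      have "fin_play F (Some v) (Some v # xs)" using fin_play_Cons[of xs F "Some v"] 1 t xs by simp
      then show ?thesis using t 1 fin_prof_Cons PP_finI by metis
    next
      case 2
      have ip: "inf_play F (Some v) (case_nat (Some v) f)" using inf_play_Cons t(1) 2(1) by blast
      have "inf_prof c (case_nat (Some v) f) = prof_add (Fin (unitv (c v))) (inf_prof c f)"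
        using inf_prof_Suc[of c "case_nat (Some v) f" "unitv (c v)"] by simp
      then show ?thesis using ip t 2 PP_infI by metis
    qed
  qed
qed


definition pos :: "nat \<Rightarrow> prof \<Rightarrow> bool" where "pos d p \<longleftrightarrow> prof_less d (Fin (\<lambda>_. 0)) p"
definition neg :: "nat \<Rightarrow> prof \<Rightarrow> bool" where "neg d p \<longleftrightarrow> prof_less d p (Fin (\<lambda>_. 0))"

definition cols :: "('v \<Rightarrow> nat) \<Rightarrow> 'v option list \<Rightarrow> nat set" where
  "cols c xs = c ` {v. Some v \<in> set xs}"

definition cnt :: "('v \<Rightarrow> nat) \<Rightarrow> 'v option list \<Rightarrow> nat \<Rightarrow> int" where
  "cnt c xs j = (\<Sum>x \<leftarrow> xs. case x of None \<Rightarrow> 0 | Some v \<Rightarrow> unitv (c v) j)"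

lemma fin_prof_cnt: "fin_prof c xs = Fin (cnt c xs)"
  unfolding fin_prof_def cnt_def by simp

lemma cnt_props: "cnt c xs j \<ge> 0 \<and> (cnt c xs j > 0 \<longleftrightarrow> j \<in> cols c xs)"
proof (induction xs)
  case Nil then show ?case by (simp add: cnt_def cols_def)
next
  case (Cons x xs)
  have cc: "cnt c (x # xs) j = (case x of None \<Rightarrow> 0 | Some v \<Rightarrow> unitv (c v) j) + cnt c xs j"
    unfolding cnt_def by simp
  have colsc: "cols c (x # xs) = (case x of None \<Rightarrow> {} | Some v \<Rightarrow> {c v}) \<union> cols c xs"
    unfolding cols_def by (cases x) auto
  show ?case using Cons cc colsc by (cases x) (auto simp: unitv_def)
qed

lemma fin_prof_sign:
  assumes fin: "finite (cols c xs)" and ne: "cols c xs \<noteq> {}" and bd: "\<forall>k\<in>cols c xs. k < d"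
  shows "pos d (fin_prof c xs) \<longleftrightarrow> even (Max (cols c xs))"
    and "neg d (fin_prof c xs) \<longleftrightarrow> odd (Max (cols c xs))"
proof -
  define m where "m = Max (cols c xs)"
  have mC: "m \<in> cols c xs" using fin ne m_def by simp
  have md: "m < d" using mC bd by blast
  have am: "cnt c xs m > 0" using cnt_props mC by blast
  have above: "\<forall>j. m < j \<longrightarrow> cnt c xs j = 0"
  proof (intro allI impI)
    fix j assume "m < j"
    then have "j \<notin> cols c xs" using fin m_def Max_ge not_le by blast
    then show "cnt c xs j = 0" using cnt_props[of c xs j] by linarith
  qed
  have kle: "k \<le> m" if "cnt c xs k \<noteq> 0" for k
  proof -
    have "k \<in> cols c xs" using that cnt_props[of c xs k] by linarith
    then show ?thesis using fin m_def by simp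
  qed
  show "pos d (fin_prof c xs) \<longleftrightarrow> even m"
  proof
    assume "pos d (fin_prof c xs)"
    then obtain k where k: "k < d" "0 \<noteq> cnt c xs k" "\<forall>j. k < j \<and> j < d \<longrightarrow> 0 = cnt c xs j"
       "(even k \<and> 0 < cnt c xs k) \<or> (odd k \<and> 0 > cnt c xs k)"
      unfolding pos_def fin_prof_cnt by auto
    have "k = m" using kle[of k] k(2,3) am md by (metis less_irrefl nat_less_le)
    then show "even m" using k(4) cnt_props[of c xs k] by auto
  next
    assume "even m"
    then show "pos d (fin_prof c xs)" unfolding pos_def fin_prof_cnt using md am above
      by (auto intro!: exI[of _ m])
  qed
  show "neg d (fin_prof c xs) \<longleftrightarrow> odd m"
  proof
    assume "neg d (fin_prof c xs)"
    then obtain k where k: "k < d" "cnt c xs k \<noteq> 0" "\<forall>j. k < j \<and> j < d \<longrightarrow> cnt c xs j = 0"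
       "(even k \<and> cnt c xs k < 0) \<or> (odd k \<and> cnt c xs k > 0)"
      unfolding neg_def fin_prof_cnt by auto
    have "k = m" using kle[of k] k(2,3) am md by (metis less_irrefl nat_less_le)
    then show "odd m" using k(4) cnt_props[of c xs k] by auto
  next
    assume "odd m"
    then show "neg d (fin_prof c xs)" unfolding neg_def fin_prof_cnt using md am above
      by (auto intro!: exI[of _ m])
  qed
qed

lemma pos_neg_excl: "pos d p \<Longrightarrow> \<not> neg d p"
  unfolding pos_def neg_def using pl_asym by blast

lemma pos_mono: "pos d p \<Longrightarrow> prof_le d p q \<Longrightarrow> pos d q"
  unfolding pos_def using pless_le_trans by blast

lemma neg_mono: "neg d q \<Longrightarrow> prof_le d p q \<Longrightarrow> neg d p"
  unfolding neg_def using ple_less_trans by blast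

lemma pos_PosInf: "pos d PosInf" unfolding pos_def by simp
lemma neg_NegInf: "neg d NegInf" unfolding neg_def by simp

lemma pos_le: "pos d p \<Longrightarrow> prof_le d (Fin (\<lambda>_. 0)) p" unfolding pos_def prof_le_def by simp
lemma neg_le: "neg d p \<Longrightarrow> prof_le d p (Fin (\<lambda>_. 0))" unfolding neg_def prof_le_def by simp


lemma play_exists: "(\<exists>xs. fin_play F x xs) \<or> (\<exists>f. inf_play F x f)"
proof -
  define nx where "nx y = (if \<exists>z. (y, z) \<in> F then SOME z. (y, z) \<in> F else y)" for y
  define w where "w n = (nx ^^ n) x" for n
  have w0: "w 0 = x" unfolding w_def by simp
  have wS: "w (Suc n) = nx (w n)" for n unfolding w_def by simp
  have nxF: "\<exists>z. (y, z) \<in> F \<Longrightarrow> (y, nx y) \<in> F" for y unfolding nx_def using someI_ex[of "\<lambda>z. (y, z) \<in> F"] by simp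
  show ?thesis
  proof (cases "\<forall>n. \<exists>z. (w n, z) \<in> F")
    case True
    then have "inf_play F x w" unfolding inf_play_def using w0 wS nxF by simp
    then show ?thesis by blast
  next
    case False
    define k where "k = (LEAST n. \<not> (\<exists>z. (w n, z) \<in> F))"
    have ex: "\<exists>n. \<not> (\<exists>z. (w n, z) \<in> F)" using False by blast
    have kd: "\<not> (\<exists>z. (w k, z) \<in> F)" unfolding k_def by (rule LeastI_ex[OF ex])
    have kl: "i < k \<Longrightarrow> \<exists>z. (w i, z) \<in> F" for i unfolding k_def using not_less_Least by blast
    define xs where "xs = map w [0..<Suc k]"
    have "fin_play F x xs"
      unfolding fin_play_def
    proof (intro conjI allI impI)
      show "xs \<noteq> []" unfolding xs_def by simp
      have "xs ! 0 = w 0" unfolding xs_def by (simp del: upt_Suc add: nth_map)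
      moreover have "xs \<noteq> []" unfolding xs_def by simp
      ultimately show "hd xs = x" using w0 by (simp add: hd_conv_nth)
    next
      fix i assume "Suc i < length xs"
      then have i: "i < k" unfolding xs_def by simp
      have "xs ! i = w i" "xs ! Suc i = w (Suc i)" using i unfolding xs_def by (simp_all del: upt_Suc add: nth_map)
      then show "(xs ! i, xs ! Suc i) \<in> F" using nxF[OF kl[OF i]] wS by simp
    next
      fix t
      have "last xs = w k" unfolding xs_def by simp
      then show "(last xs, t) \<notin> F" using kd by simp
    qed
    then show ?thesis by blast
  qed
qed

lemma cols_append: "cols c (xs @ ys) = cols c xs \<union> cols c ys"
  unfolding cols_def by auto

lemma cols_None: "cols c [None] = {}"
  unfolding cols_def by auto

lemma cols_the: "set ys \<subseteq> Some ` U \<Longrightarrow> (\<lambda>x. c (the x)) ` set ys = cols c ys"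
  unfolding cols_def by force


lemma pos_zero_le: "pos d M \<Longrightarrow> prof_le d (Fin u) (prof_add (Fin u) M)"
proof -
  assume "pos d M"
  then have "prof_le d (Fin (\<lambda>_. 0)) M" by (rule pos_le)
  then have "prof_le d (prof_add (Fin u) (Fin (\<lambda>_. 0))) (prof_add (Fin u) M)" using padd_le by blast
  then show ?thesis by simp
qed

lemma neg_zero_less: "neg d M \<Longrightarrow> prof_less d (prof_add (Fin u) M) (Fin u)"
proof -
  assume "neg d M"
  then have "prof_less d M (Fin (\<lambda>_. 0))" unfolding neg_def .
  then have "prof_less d (prof_add (Fin u) M) (prof_add (Fin u) (Fin (\<lambda>_. 0)))" using padd_less by blast
  then show ?thesis by simp
qed



locale G =
  fixes V :: "'v set" and E :: "('v \<times> 'v) set" and own c :: "'v \<Rightarrow> nat" and d :: nat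
  assumes arena: "arena V E own c d"
    and bin: "\<forall>s \<in> Vown V own 0. card (Ebot V E own `` {Some s}) \<le> 2"
begin

abbreviation "V0 \<equiv> Vown V own 0"
abbreviation "V1 \<equiv> Vown V own 1"

definition e :: "'v \<Rightarrow> 'v" where "e s = (SOME w. (s, w) \<in> E)"

lemma finV: "finite V" using arena unfolding arena_def by blast
lemma EV: "E \<subseteq> V \<times> V" using arena unfolding arena_def by blast
lemma succE: "v \<in> V \<Longrightarrow> \<exists>w. (v, w) \<in> E" using arena unfolding arena_def by blast
lemma ownV: "v \<in> V \<Longrightarrow> own v = 0 \<or> own v = 1" using arena unfolding arena_def by blast
lemma cd: "v \<in> V \<Longrightarrow> c v < d"
proof -
  assume "v \<in> V" then have "c v \<in> c ` V" by blast
  then show ?thesis using arena unfolding arena_def by auto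
qed

lemma V0V: "s \<in> V0 \<Longrightarrow> s \<in> V" unfolding Vown_def by auto
lemma V1V: "s \<in> V1 \<Longrightarrow> s \<in> V" unfolding Vown_def by auto
lemma V01: "v \<in> V \<Longrightarrow> v \<in> V0 \<or> v \<in> V1" unfolding Vown_def using ownV by auto
lemma V01d: "v \<in> V0 \<Longrightarrow> v \<notin> V1" unfolding Vown_def by auto

lemma e_prop: "s \<in> V0 \<Longrightarrow> (s, e s) \<in> E \<and> e s \<in> V"
proof -
  assume s: "s \<in> V0"
  then have "\<exists>w. (s, w) \<in> E" using succE V0V by blast
  then have "(s, e s) \<in> E" unfolding e_def by (rule someI_ex)
  then show ?thesis using EV by blast
qed

lemma e_uniq: assumes s: "s \<in> V0" and w: "(s, w) \<in> E" shows "w = e s"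
proof (rule ccontr)
  assume ne: "w \<noteq> e s"
  have es: "(s, e s) \<in> E" using e_prop s by blast
  have sub: "{None, Some w, Some (e s)} \<subseteq> Ebot V E own `` {Some s}"
    using s w es unfolding Ebot_def lift_edges_def by auto
  have fin: "finite (Ebot V E own `` {Some s})"
  proof -
    have "Ebot V E own `` {Some s} \<subseteq> insert None (Some ` V)"
      using EV unfolding Ebot_def lift_edges_def by auto
    then show ?thesis using finV finite_subset by blast
  qed
  have "card {None, Some w, Some (e s)} = 3" using ne by simp
  then have "3 \<le> card (Ebot V E own `` {Some s})" using card_mono[OF fin sub] by simp
  then show False using bin s by fastforce
qed

lemma E0_char: "(x, t) \<in> E0 V E own \<longleftrightarrow> (\<exists>s\<in>V0. x = Some s \<and> (t = None \<or> t = Some (e s)))"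
proof
  assume "(x, t) \<in> E0 V E own"
  then show "\<exists>s\<in>V0. x = Some s \<and> (t = None \<or> t = Some (e s))"
    unfolding E0_def Ebot_def lift_edges_def using e_uniq by auto
next
  assume "\<exists>s\<in>V0. x = Some s \<and> (t = None \<or> t = Some (e s))"
  then show "(x, t) \<in> E0 V E own"
    unfolding E0_def Ebot_def lift_edges_def using e_prop by auto
qed

lemma E1_char: "(x, t) \<in> E1 V E own \<longleftrightarrow> (\<exists>v w. x = Some v \<and> t = Some w \<and> v \<in> V1 \<and> (v, w) \<in> E)"
  unfolding E1_def lift_edges_def by auto

definition goodS :: "('v option \<times> 'v option) set \<Rightarrow> bool" where
  "goodS \<sigma> \<longleftrightarrow> \<sigma> \<subseteq> E0 V E own \<and> (\<forall>s\<in>V0. \<exists>t. (Some s, t) \<in> \<sigma>)"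

definition T1 :: "('v option \<times> 'v option) set set" where
  "T1 = {\<tau>. is_strategy V E own 1 \<tau>}"

lemma T1_char: "\<tau> \<in> T1 \<longleftrightarrow> \<tau> \<subseteq> E1 V E own \<and> (\<forall>s\<in>V1. \<exists>t. (Some s, t) \<in> \<tau>)"
  unfolding T1_def is_strategy_def by simp

lemma finE: "finite E" using EV finV finite_subset by blast

lemma finE1: "finite (E1 V E own)"
proof -
  have "E1 V E own \<subseteq> (\<lambda>(a, b). (Some a, Some b)) ` E" unfolding E1_def lift_edges_def by auto
  then show ?thesis using finE finite_subset by blast
qed

lemma T1_fin: "finite T1"
proof -
  have "T1 \<subseteq> Pow (E1 V E own)" using T1_char by blast
  then show ?thesis using finE1 finite_subset by blast
qed

lemma T1_ne: "E1 V E own \<in> T1"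
proof -
  have "\<forall>s\<in>V1. \<exists>t. (Some s, t) \<in> E1 V E own"
  proof
    fix s assume s: "s \<in> V1"
    then obtain w where "(s, w) \<in> E" using succE V1V by blast
    then show "\<exists>t. (Some s, t) \<in> E1 V E own" using s E1_char by blast
  qed
  then show ?thesis unfolding T1_char by simp
qed

context
  fixes \<sigma> \<tau>
  assumes g: "goodS \<sigma>" and t: "\<tau> \<in> T1"
begin

lemma F_edge: assumes "(x, y) \<in> \<sigma> \<union> \<tau>" shows "(\<exists>w\<in>V. x = Some w) \<and> (y = None \<or> (\<exists>w\<in>V. y = Some w))"
proof (cases "(x, y) \<in> \<sigma>")
  case True
  then have "(x, y) \<in> E0 V E own" using g unfolding goodS_def by blast
  then obtain s where "s \<in> V0" "x = Some s" "y = None \<or> y = Some (e s)" using E0_char by blast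
  then show ?thesis using e_prop V0V by blast
next
  case False
  then have "(x, y) \<in> E1 V E own" using assms t T1_char by blast
  then obtain v w where "x = Some v" "y = Some w" "v \<in> V1" "(v, w) \<in> E" using E1_char by blast
  then show ?thesis using EV V1V by blast
qed

lemma F_None: "(None, y) \<notin> \<sigma> \<union> \<tau>" using F_edge by blast

lemma F_succ: assumes "w \<in> V" shows "\<exists>y. (Some w, y) \<in> \<sigma> \<union> \<tau>"
proof (cases "w \<in> V0")
  case True then show ?thesis using g unfolding goodS_def by blast
next
  case False then have "w \<in> V1" using V01 assms by blast
  then show ?thesis using t unfolding T1_char by blast
qed

lemma F_V0: "s \<in> V0 \<Longrightarrow> (Some s, y) \<in> \<sigma> \<union> \<tau> \<longleftrightarrow> (Some s, y) \<in> \<sigma>"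
proof -
  assume s: "s \<in> V0"
  have "(Some s, y) \<notin> \<tau>"
  proof
    assume "(Some s, y) \<in> \<tau>" then have "(Some s, y) \<in> E1 V E own" using t T1_char by blast
    then show False using E1_char V01d s by blast
  qed
  then show ?thesis by blast
qed

lemma F_V0_targets: "s \<in> V0 \<Longrightarrow> (Some s, y) \<in> \<sigma> \<Longrightarrow> y = None \<or> y = Some (e s)"
proof -
  assume "s \<in> V0" "(Some s, y) \<in> \<sigma>"
  then have "(Some s, y) \<in> E0 V E own" using g unfolding goodS_def by blast
  then show ?thesis unfolding E0_char by auto
qed

lemma fin_play_struct:
  assumes v: "v \<in> V" and fp: "fin_play (\<sigma> \<union> \<tau>) (Some v) xs"
  shows "2 \<le> length xs" "last xs = None" "\<And>i. i < length xs - 1 \<Longrightarrow> \<exists>w\<in>V. xs ! i = Some w"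
proof -
  have x0: "xs ! 0 = Some v" "xs \<noteq> []" using fp unfolding fin_play_def by (auto simp: hd_conv_nth)
  have ed: "\<And>i. Suc i < length xs \<Longrightarrow> (xs ! i, xs ! Suc i) \<in> \<sigma> \<union> \<tau>" using fp unfolding fin_play_def by blast
  have all: "xs ! i = None \<or> (\<exists>w\<in>V. xs ! i = Some w)" if "i < length xs" for i
    using that
  proof (induction i)
    case 0 then show ?case using x0 v by blast
  next
    case (Suc i) then show ?case using ed F_edge by blast
  qed
  have notnone: "\<exists>w\<in>V. xs ! i = Some w" if "i < length xs - 1" for i
  proof -
    have "(xs ! i, xs ! Suc i) \<in> \<sigma> \<union> \<tau>" using ed that by simp
    then show ?thesis using F_edge by blast
  qed
  then show "\<And>i. i < length xs - 1 \<Longrightarrow> \<exists>w\<in>V. xs ! i = Some w" by blast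
  have lastdead: "\<forall>t. (last xs, t) \<notin> \<sigma> \<union> \<tau>" using fp unfolding fin_play_def by blast
  have lx: "last xs = xs ! (length xs - 1)" using x0 by (simp add: last_conv_nth)
  have "last xs = None"
  proof (rule ccontr)
    assume "last xs \<noteq> None"
    then obtain w where "w \<in> V" "last xs = Some w" using all[of "length xs - 1"] lx x0 by auto
    then show False using F_succ lastdead by metis
  qed
  then show "last xs = None" .
  show "2 \<le> length xs"
  proof (rule ccontr)
    assume "\<not> 2 \<le> length xs" then have "length xs = 1" using x0 by (cases xs) (auto simp: Suc_le_eq)
    then show False using \<open>last xs = None\<close> lx x0 by simp
  qed
qed

lemma inf_play_struct:
  assumes v: "v \<in> V" and ip: "inf_play (\<sigma> \<union> \<tau>) (Some v) f"
  shows "\<exists>w\<in>V. f n = Some w"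
proof (induction n)
  case 0 then show ?case using ip v unfolding inf_play_def by blast
next
  case (Suc n)
  have "(f n, f (Suc n)) \<in> \<sigma> \<union> \<tau>" using ip unfolding inf_play_def by blast
  then have h1: "f (Suc n) = None \<or> (\<exists>w\<in>V. f (Suc n) = Some w)" using F_edge by blast
  have "(f (Suc n), f (Suc (Suc n))) \<in> \<sigma> \<union> \<tau>" using ip unfolding inf_play_def by blast
  then have "f (Suc n) \<noteq> None" using F_None by metis
  then show ?case using h1 by auto
qed

lemma fin_play_cols:
  assumes v: "v \<in> V" and fp: "fin_play (\<sigma> \<union> \<tau>) (Some v) xs"
  shows "finite (cols c xs)" "cols c xs \<noteq> {}" "\<forall>k\<in>cols c xs. k < d" "{w. Some w \<in> set xs} \<subseteq> V"
proof -
  have sub: "{w. Some w \<in> set xs} \<subseteq> V"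
  proof
    fix w assume "w \<in> {w. Some w \<in> set xs}"
    then obtain i where i: "i < length xs" "xs ! i = Some w" by (auto simp: in_set_conv_nth)
    have "i \<noteq> length xs - 1"
    proof
      assume "i = length xs - 1"
      moreover have "xs \<noteq> []" using i by auto
      ultimately have "xs ! i = last xs" by (simp add: last_conv_nth)
      then show False using i(2) fin_play_struct(2)[OF v fp] by simp
    qed
    then have "i < length xs - 1" using i by linarith
    then obtain w' where "w' \<in> V" "xs ! i = Some w'" using fin_play_struct(3)[OF v fp] by blast
    then show "w \<in> V" using i by simp
  qed
  then show "{w. Some w \<in> set xs} \<subseteq> V" .
  show "finite (cols c xs)" unfolding cols_def using sub finV finite_subset by blast
  have "Some v \<in> set xs" using fp unfolding fin_play_def by (metis list.set_sel(1))
  then show "cols c xs \<noteq> {}" unfolding cols_def by blast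
  show "\<forall>k\<in>cols c xs. k < d" unfolding cols_def using sub cd by auto
qed

lemma PP_sign:
  assumes v: "v \<in> V" and p: "p \<in> play_profiles c (\<sigma> \<union> \<tau>) (Some v)"
  shows "pos d p \<or> neg d p"
  using p
proof (rule PP_cases)
  fix xs assume a: "fin_play (\<sigma> \<union> \<tau>) (Some v) xs" "p = fin_prof c xs"
  note cc = fin_play_cols[OF v a(1)]
  have "pos d (fin_prof c xs) \<longleftrightarrow> even (Max (cols c xs))" "neg d (fin_prof c xs) \<longleftrightarrow> odd (Max (cols c xs))"
    using fin_prof_sign[OF cc(1) cc(2) cc(3)] by blast+
  then show ?thesis using a(2) by auto
next
  fix f assume "inf_play (\<sigma> \<union> \<tau>) (Some v) f" "p = inf_prof c f"
  then show ?thesis unfolding inf_prof_def using pos_PosInf neg_NegInf by auto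
qed

end

end


lemma cnt_append: "cnt c (xs @ ys) j = cnt c xs j + cnt c ys j"
  unfolding cnt_def by simp

context G begin

context
  fixes \<sigma> \<tau>
  assumes g: "goodS \<sigma>" and t: "\<tau> \<in> T1"
begin

lemma PP_ne2: assumes v: "v \<in> V" shows "play_profiles c (\<sigma> \<union> \<tau>) (Some v) \<noteq> {}"
  using play_exists[of "\<sigma> \<union> \<tau>" "Some v"] PP_finI PP_infI by blast

lemma fin_elems: assumes v: "v \<in> V" and fp: "fin_play (\<sigma> \<union> \<tau>) (Some v) xs"
  shows "set xs \<subseteq> insert None (Some ` V)"
proof
  fix x assume "x \<in> set xs"
  then obtain i where i: "i < length xs" "x = xs ! i" by (metis in_set_conv_nth)
  show "x \<in> insert None (Some ` V)"
  proof (cases "i < length xs - 1")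
    case True then show ?thesis using fin_play_struct(3)[OF g t v fp] i by blast
  next
    case False then have "i = length xs - 1" using i by simp
    moreover have "xs \<noteq> []" using i by auto
    ultimately have "x = last xs" using i by (simp add: last_conv_nth)
    then show ?thesis using fin_play_struct(2)[OF g t v fp] by simp
  qed
qed

lemma shorten:
  assumes v: "v \<in> V" and noinf: "\<not> (\<exists>f. inf_play (\<sigma> \<union> \<tau>) (Some v) f \<and> inf_prof c f = PosInf)"
  shows "fin_play (\<sigma> \<union> \<tau>) (Some v) xs \<Longrightarrow>
    \<exists>ys. fin_play (\<sigma> \<union> \<tau>) (Some v) ys \<and> distinct ys \<and> prof_le d (fin_prof c xs) (fin_prof c ys)"
proof (induction "length xs" arbitrary: xs rule: less_induct)
  case less
  note fp = less.prems
  note st = fin_play_struct[OF g t v fp]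
  have ed: "\<And>k. Suc k < length xs \<Longrightarrow> (xs ! k, xs ! Suc k) \<in> \<sigma> \<union> \<tau>" using fp unfolding fin_play_def by blast
  have x0: "xs ! 0 = Some v" using fp unfolding fin_play_def by (metis hd_conv_nth)
  show ?case
  proof (cases "distinct xs")
    case True then show ?thesis using fp ple_refl by blast
  next
    case False
    then obtain i j where ij0: "i < length xs" "j < length xs" "i \<noteq> j" "xs ! i = xs ! j"
      unfolding distinct_conv_nth by blast
    obtain i j where ij: "i < j" "j < length xs" "xs ! i = xs ! j"
    proof (cases "i < j")
      case True then show ?thesis using that ij0 by blast
    next
      case False then have "j < i" using ij0 by simp
      then show ?thesis using that ij0 by metis
    qed
    have xne: "xs \<noteq> []" using ij by auto
    have lastN: "xs ! (length xs - 1) = None" using st(2) xne by (simp add: last_conv_nth)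
    have jl: "j < length xs - 1"
    proof (rule ccontr)
      assume "\<not> j < length xs - 1" then have "j = length xs - 1" using ij by simp
      then have "xs ! i = None" using ij lastN by simp
      moreover have "i < length xs - 1" using ij \<open>j = length xs - 1\<close> by simp
      ultimately show False using st(3) by fastforce
    qed
    define cyc where "cyc = take (j - i) (drop i xs)"
    have lcyc: "length cyc = j - i" unfolding cyc_def using ij by simp
    have cycn: "cyc ! k = xs ! (i + k)" if "k < j - i" for k unfolding cyc_def using that ij by simp
    have cycne: "cyc \<noteq> []" using lcyc ij by auto
    have cycsub: "set cyc \<subseteq> Some ` V"
    proof
      fix x assume "x \<in> set cyc"
      then obtain k where k: "k < length cyc" "x = cyc ! k" by (metis in_set_conv_nth)
      then have "x = xs ! (i + k)" "i + k < length xs - 1" using cycn lcyc jl by auto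
      then show "x \<in> Some ` V" using st(3) by fastforce
    qed
    have colsfin: "finite (cols c cyc)" "cols c cyc \<noteq> {}" "\<forall>k\<in>cols c cyc. k < d"
    proof -
      have sub: "{w. Some w \<in> set cyc} \<subseteq> V" using cycsub by auto
      then show "finite (cols c cyc)" unfolding cols_def using finite_subset[OF sub finV] by simp
      obtain x where "x \<in> set cyc" using cycne by (meson list.set_sel(1))
      then obtain w where "Some w \<in> set cyc" using cycsub by blast
      then show "cols c cyc \<noteq> {}" unfolding cols_def by blast
      show "\<forall>k\<in>cols c cyc. k < d" unfolding cols_def using sub cd by auto
    qed
    show ?thesis
    proof (cases "even (Max (cols c cyc))")
      case True
      define L where "L k = (if k = 0 then take j xs else cyc)" for k :: nat
      have Lne: "L k \<noteq> []" for k unfolding L_def using cycne ij by auto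
      have inner: "(L k ! m, L k ! Suc m) \<in> \<sigma> \<union> \<tau>" if "Suc m < length (L k)" for k m
      proof (cases "k = 0")
        case True then show ?thesis using that ed ij unfolding L_def by simp
      next
        case False
        then have "Suc m < j - i" using that lcyc unfolding L_def by simp
        then show ?thesis using cycn ed jl False unfolding L_def by simp
      qed
      have lastL: "last (L k) = xs ! (j - 1)" for k
      proof (cases "k = 0")
        case True
        have "take j xs \<noteq> []" using ij by auto
        then have "last (take j xs) = take j xs ! (length (take j xs) - 1)" by (simp add: last_conv_nth)
        also have "\<dots> = xs ! (j - 1)" using ij by simp
        finally show ?thesis unfolding L_def using True by simp
      next
        case False
        then have "last (L k) = cyc ! (j - i - 1)" unfolding L_def using cycne lcyc by (simp add: last_conv_nth)
        then show ?thesis using cycn ij by simp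
      qed
      have hdL: "hd (L (Suc k)) = xs ! j" for k unfolding L_def using cycne cycn ij by (simp add: hd_conv_nth)
      have link: "(last (L k), hd (L (Suc k))) \<in> \<sigma> \<union> \<tau>" for k
        using lastL hdL ed[of "j - 1"] ij by simp
      have ip: "inf_play (\<sigma> \<union> \<tau>) (Some v) (conc L)"
        unfolding inf_play_def
      proof (intro conjI allI)
        have "hd xs = Some v" using fp unfolding fin_play_def by blast
        then show "conc L 0 = Some v" using conc_0[of L, OF Lne] ij unfolding L_def by simp
        fix n show "(conc L n, conc L (Suc n)) \<in> \<sigma> \<union> \<tau>"
          by (rule conc_edges[of L, OF Lne]) (use inner link in auto)
      qed
      have rngsub: "range (\<lambda>n. c (the (conc L n))) \<subseteq> (\<lambda>x. c (the x)) ` set xs"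
      proof
        fix y assume "y \<in> range (\<lambda>n. c (the (conc L n)))"
        then obtain n where n: "y = c (the (conc L n))" by blast
        obtain k where "conc L n \<in> set (L k)" using conc_range[of L n, OF Lne] by blast
        moreover have "set (L k) \<subseteq> set xs" unfolding L_def cyc_def
          using set_take_subset[of j xs] set_take_subset[of "j - i" "drop i xs"] set_drop_subset[of i xs] by auto
        ultimately show "y \<in> (\<lambda>x. c (the x)) ` set xs" using n by blast
      qed
      have fin: "finite (range (\<lambda>n. c (the (conc L n))))" using finite_subset[OF rngsub] by simp
      have "even (Max (infc (\<lambda>x. c (the x)) (conc L)))"
      proof (rule conc_parity[of L, OF Lne fin, where K=1])
        fix k :: nat assume "1 \<le> k"
        then have "L k = cyc" unfolding L_def by simp
        moreover have "(\<lambda>x. c (the x)) ` set cyc = cols c cyc" using cols_the cycsub by blast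
        ultimately show "even (Max ((\<lambda>x. c (the x)) ` set (L k)))" using True by simp
      qed
      moreover have "infc (\<lambda>x. c (the x)) (conc L) = infc c (\<lambda>i. the (conc L i))" unfolding infc_def by simp
      ultimately have "inf_prof c (conc L) = PosInf" unfolding inf_prof_def parity_infc by simp
      then show ?thesis using noinf ip by blast
    next
      case False
      define ys where "ys = take i xs @ drop j xs"
      have lys: "length ys = length xs - (j - i)" unfolding ys_def using ij by simp
      have ysn: "ys ! k = (if k < i then xs ! k else xs ! (k - i + j))" if "k < length ys" for k
        unfolding ys_def using that ij by (auto simp: nth_append add.commute)
      have split: "xs = take i xs @ cyc @ drop j xs"
      proof -
        have "drop i xs = cyc @ drop (j - i) (drop i xs)" unfolding cyc_def by (rule append_take_drop_id[symmetric])
        moreover have "drop (j - i) (drop i xs) = drop j xs" using ij by simp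
        ultimately show ?thesis by (metis append_take_drop_id)
      qed
      have fpy: "fin_play (\<sigma> \<union> \<tau>) (Some v) ys"
        unfolding fin_play_def
      proof (intro conjI allI impI)
        show "ys \<noteq> []" unfolding ys_def using ij by simp
        show "hd ys = Some v"
        proof (cases "i = 0")
          case True then have "hd ys = xs ! j" unfolding ys_def using ij by (simp add: hd_drop_conv_nth)
          then show ?thesis using ij True x0 by simp
        next
          case False then have "hd ys = xs ! 0" unfolding ys_def using ij by (simp add: hd_conv_nth nth_append)
          then show ?thesis using x0 by simp
        qed
      next
        fix k assume k: "Suc k < length ys"
        show "(ys ! k, ys ! Suc k) \<in> \<sigma> \<union> \<tau>"
        proof (cases "Suc k < i")
          case True then show ?thesis using ysn k ed ij by simp
        next
          case F1: False
          show ?thesis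
          proof (cases "Suc k = i")
            case True
            then have "ys ! k = xs ! k" "ys ! Suc k = xs ! j" using ysn k by simp_all
            moreover have "(xs ! k, xs ! i) \<in> \<sigma> \<union> \<tau>" using ed[of k] True ij by simp
            ultimately show ?thesis using ij by simp
          next
            case False
            then have ki: "k \<ge> i" using F1 by simp
            then have "ys ! k = xs ! (k - i + j)" "ys ! Suc k = xs ! Suc (k - i + j)" using ysn k
              by (simp_all add: Suc_diff_le)
            moreover have "Suc (k - i + j) < length xs" using k lys ki ij by simp
            ultimately show ?thesis using ed by simp
          qed
        qed
      next
        fix t' show "(last ys, t') \<notin> \<sigma> \<union> \<tau>"
        proof -
          have "last ys = last xs" unfolding ys_def using ij by simp
          then show ?thesis using fp unfolding fin_play_def by simp
        qed
      qed
      have shorter: "length ys < length xs" using lys ij by simp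
      obtain zs where zs: "fin_play (\<sigma> \<union> \<tau>) (Some v) zs" "distinct zs" "prof_le d (fin_prof c ys) (fin_prof c zs)"
        using less.hyps[OF shorter fpy] by blast
      have negc: "neg d (fin_prof c cyc)" using fin_prof_sign(2)[OF colsfin] False by simp
      have "fin_prof c xs = prof_add (Fin (cnt c ys)) (fin_prof c cyc)"
      proof -
        have "cnt c xs = (\<lambda>j'. cnt c ys j' + cnt c cyc j')"
        proof
          fix j'
          have "cnt c xs j' = cnt c (take i xs) j' + (cnt c cyc j' + cnt c (drop j xs) j')"
            using split cnt_append by metis
          then show "cnt c xs j' = cnt c ys j' + cnt c cyc j'" unfolding ys_def cnt_append by simp
        qed
        then show ?thesis unfolding fin_prof_cnt by simp
      qed
      moreover have "prof_less d (prof_add (Fin (cnt c ys)) (fin_prof c cyc)) (Fin (cnt c ys))"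
        by (rule neg_zero_less[OF negc])
      ultimately have "prof_less d (fin_prof c xs) (fin_prof c ys)" unfolding fin_prof_cnt[of c ys] by simp
      then have "prof_le d (fin_prof c xs) (fin_prof c zs)" using zs(3) pless_le_trans unfolding prof_le_def by blast
      then show ?thesis using zs by blast
    qed
  qed
qed

lemma MAXEX2: assumes v: "v \<in> V" shows "\<exists>m. hasmax d (play_profiles c (\<sigma> \<union> \<tau>) (Some v)) m"
proof (cases "\<exists>f. inf_play (\<sigma> \<union> \<tau>) (Some v) f \<and> inf_prof c f = PosInf")
  case True
  then obtain f where "inf_play (\<sigma> \<union> \<tau>) (Some v) f" "inf_prof c f = PosInf" by blast
  then have "PosInf \<in> play_profiles c (\<sigma> \<union> \<tau>) (Some v)" using PP_infI by metis
  moreover have "prof_le d q PosInf" for q unfolding prof_le_def by (cases q) auto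
  ultimately show ?thesis unfolding hasmax_def by blast
next
  case noinf: False
  let ?PP = "play_profiles c (\<sigma> \<union> \<tau>) (Some v)"
  have infneg: "inf_prof c f = NegInf" if "inf_play (\<sigma> \<union> \<tau>) (Some v) f" for f
    using noinf that unfolding inf_prof_def by auto
  define D where "D = {ys. fin_play (\<sigma> \<union> \<tau>) (Some v) ys \<and> distinct ys}"
  let ?U = "insert None (Some ` V)"
  have finU: "finite ?U" using finV by simp
  have Dsub: "D \<subseteq> {xs. set xs \<subseteq> ?U \<and> length xs \<le> card ?U}"
  proof
    fix ys assume "ys \<in> D"
    then have ys: "fin_play (\<sigma> \<union> \<tau>) (Some v) ys" "distinct ys" unfolding D_def by blast+
    have s: "set ys \<subseteq> ?U" using fin_elems[OF v ys(1)] .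
    have "length ys = card (set ys)" using distinct_card[OF ys(2)] by simp
    also have "\<dots> \<le> card ?U" using card_mono[OF finU s] .
    finally show "ys \<in> {xs. set xs \<subseteq> ?U \<and> length xs \<le> card ?U}" using s by blast
  qed
  have finD: "finite D" using finite_subset[OF Dsub finite_lists_length_le[OF finU]] .
  show ?thesis
  proof (cases "D = {}")
    case False
    obtain m where m: "hasmax d (fin_prof c ` D) m" using finite_hasmax[of "fin_prof c ` D" d] finD False by blast
    then obtain ym where ym: "ym \<in> D" "m = fin_prof c ym" unfolding hasmax_def by blast
    have "m \<in> ?PP" using ym PP_finI unfolding D_def by blast
    moreover have "prof_le d q m" if q: "q \<in> ?PP" for q
      using q
    proof (rule PP_cases)
      fix xs assume xs: "fin_play (\<sigma> \<union> \<tau>) (Some v) xs" "q = fin_prof c xs"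
      obtain ys where ys: "fin_play (\<sigma> \<union> \<tau>) (Some v) ys" "distinct ys" "prof_le d (fin_prof c xs) (fin_prof c ys)"
        using shorten[OF v noinf xs(1)] by blast
      have "ys \<in> D" using ys unfolding D_def by blast
      then have "prof_le d (fin_prof c ys) m" using m unfolding hasmax_def by blast
      then show ?thesis using xs(2) ys(3) ple_trans by blast
    next
      fix f assume "inf_play (\<sigma> \<union> \<tau>) (Some v) f" "q = inf_prof c f"
      then have "q = NegInf" using infneg by simp
      then show ?thesis using ym unfolding prof_le_def fin_prof_def by simp
    qed
    ultimately show ?thesis unfolding hasmax_def by blast
  next
    case True
    have nofin: "\<not> fin_play (\<sigma> \<union> \<tau>) (Some v) xs" for xs
    proof
      assume "fin_play (\<sigma> \<union> \<tau>) (Some v) xs"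
      then obtain ys where "fin_play (\<sigma> \<union> \<tau>) (Some v) ys" "distinct ys" using shorten[OF v noinf] by blast
      then show False using True unfolding D_def by blast
    qed
    have allneg: "q = NegInf" if "q \<in> ?PP" for q
      using that by (rule PP_cases) (use nofin infneg in auto)
    obtain q where "q \<in> ?PP" using PP_ne2[OF v] by blast
    then have "NegInf \<in> ?PP" using allneg by metis
    moreover have "prof_le d q NegInf" if "q \<in> ?PP" for q using allneg[OF that] ple_refl by simp
    ultimately show ?thesis unfolding hasmax_def by blast
  qed
qed

end

end


context G begin

abbreviation PP :: "('v option \<times> 'v option) set \<Rightarrow> ('v option \<times> 'v option) set \<Rightarrow> 'v option \<Rightarrow> prof set" where
  "PP \<sigma> \<tau> x \<equiv> play_profiles c (\<sigma> \<union> \<tau>) x"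

abbreviation val :: "('v option \<times> 'v option) set \<Rightarrow> 'v option \<Rightarrow> prof" where
  "val \<sigma> x \<equiv> valuation V E own c d \<sigma> x"

definition Pset :: "('v option \<times> 'v option) set \<Rightarrow> 'v set" where
  "Pset \<sigma> = {v \<in> V. \<forall>\<tau>\<in>T1. \<exists>p\<in>PP \<sigma> \<tau> (Some v). pos d p}"

lemma val_Some: "val \<sigma> (Some v) = pmin d ((\<lambda>\<tau>. pmax d (PP \<sigma> \<tau> (Some v))) ` T1)"
proof -
  have "{pmax d (PP \<sigma> \<tau> (Some v)) | \<tau>. is_strategy V E own 1 \<tau>} = (\<lambda>\<tau>. pmax d (PP \<sigma> \<tau> (Some v))) ` T1"
    unfolding T1_def by blast
  then show ?thesis unfolding valuation_def by simp
qed

lemma val_None: "val \<sigma> None = Fin (\<lambda>_. 0)" unfolding valuation_def by simp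

lemma pmax_PP: assumes "goodS \<sigma>" "\<tau> \<in> T1" "v \<in> V"
  shows "hasmax d (PP \<sigma> \<tau> (Some v)) (pmax d (PP \<sigma> \<tau> (Some v)))"
  using MAXEX2[OF assms] pmax_hasmax by blast

lemma val_hasmin: assumes "goodS \<sigma>" "v \<in> V"
  shows "hasmin d ((\<lambda>\<tau>. pmax d (PP \<sigma> \<tau> (Some v))) ` T1) (val \<sigma> (Some v))"
proof -
  have "finite ((\<lambda>\<tau>. pmax d (PP \<sigma> \<tau> (Some v))) ` T1)" using T1_fin by simp
  moreover have "(\<lambda>\<tau>. pmax d (PP \<sigma> \<tau> (Some v))) ` T1 \<noteq> {}" using T1_ne by blast
  ultimately obtain m where "hasmin d ((\<lambda>\<tau>. pmax d (PP \<sigma> \<tau> (Some v))) ` T1) m" using finite_hasmin by blast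
  then show ?thesis unfolding val_Some by (rule pmin_hasmin)
qed

lemma val_sign: assumes g: "goodS \<sigma>" and v: "v \<in> V"
  shows "pos d (val \<sigma> (Some v)) \<or> neg d (val \<sigma> (Some v))"
    and "pos d (val \<sigma> (Some v)) \<longleftrightarrow> v \<in> Pset \<sigma>"
proof -
  note hm = val_hasmin[OF g v]
  obtain \<tau>0 where t0: "\<tau>0 \<in> T1" "val \<sigma> (Some v) = pmax d (PP \<sigma> \<tau>0 (Some v))" using hm unfolding hasmin_def by blast
  have "pmax d (PP \<sigma> \<tau>0 (Some v)) \<in> PP \<sigma> \<tau>0 (Some v)" using pmax_PP[OF g t0(1) v] unfolding hasmax_def by blast
  then show "pos d (val \<sigma> (Some v)) \<or> neg d (val \<sigma> (Some v))" using PP_sign[OF g t0(1) v] t0(2) by simp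
  show "pos d (val \<sigma> (Some v)) \<longleftrightarrow> v \<in> Pset \<sigma>"
  proof
    assume pv: "pos d (val \<sigma> (Some v))"
    have "\<forall>\<tau>\<in>T1. \<exists>p\<in>PP \<sigma> \<tau> (Some v). pos d p"
    proof
      fix \<tau> assume t: "\<tau> \<in> T1"
      have "prof_le d (val \<sigma> (Some v)) (pmax d (PP \<sigma> \<tau> (Some v)))" using hm t unfolding hasmin_def by blast
      then have "pos d (pmax d (PP \<sigma> \<tau> (Some v)))" using pv pos_mono by blast
      moreover have "pmax d (PP \<sigma> \<tau> (Some v)) \<in> PP \<sigma> \<tau> (Some v)" using pmax_PP[OF g t v] unfolding hasmax_def by blast
      ultimately show "\<exists>p\<in>PP \<sigma> \<tau> (Some v). pos d p" by blast
    qed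
    then show "v \<in> Pset \<sigma>" unfolding Pset_def using v by blast
  next
    assume "v \<in> Pset \<sigma>"
    then obtain p where p: "p \<in> PP \<sigma> \<tau>0 (Some v)" "pos d p" unfolding Pset_def using t0(1) by blast
    have "prof_le d p (pmax d (PP \<sigma> \<tau>0 (Some v)))" using pmax_PP[OF g t0(1) v] p(1) unfolding hasmax_def by blast
    then show "pos d (val \<sigma> (Some v))" using t0(2) p(2) pos_mono by simp
  qed
qed

definition hS :: "('v option \<times> 'v option) set \<Rightarrow> 'v \<Rightarrow> prof \<Rightarrow> prof" where
  "hS \<sigma> s M = (if (Some s, Some (e s)) \<in> \<sigma> then
      (if (Some s, None) \<in> \<sigma> then (if pos d M then prof_add (Fin (unitv (c s))) M else Fin (unitv (c s)))
       else prof_add (Fin (unitv (c s))) M)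
     else Fin (unitv (c s)))"

lemma not_pos_le: "\<not> pos d M \<Longrightarrow> prof_le d M (Fin (\<lambda>_. 0))"
  unfolding pos_def using not_ple[of d M "Fin (\<lambda>_. 0)"] by blast

lemma hS_mono: "prof_le d p q \<Longrightarrow> prof_le d (hS \<sigma> s p) (hS \<sigma> s q)"
proof -
  assume pq: "prof_le d p q"
  let ?u = "Fin (unitv (c s))"
  have 1: "prof_le d (prof_add ?u p) (prof_add ?u q)" using pq padd_le by blast
  have 2: "prof_le d (if pos d p then prof_add ?u p else ?u) (if pos d q then prof_add ?u q else ?u)"
  proof (cases "pos d p")
    case True then have "pos d q" using pq pos_mono by blast
    then show ?thesis using True 1 by simp
  next
    case False
    show ?thesis
    proof (cases "pos d q")
      case True then show ?thesis using False pos_zero_le by simp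
    next
      case F2: False then show ?thesis using False ple_refl by simp
    qed
  qed
  show ?thesis unfolding hS_def using 1 2 ple_refl by auto
qed

lemma PP_V0:
  assumes g: "goodS \<sigma>" and t: "\<tau> \<in> T1" and s: "s \<in> V0"
  shows "PP \<sigma> \<tau> (Some s) = (if (Some s, None) \<in> \<sigma> then {Fin (unitv (c s))} else {})
      \<union> (if (Some s, Some (e s)) \<in> \<sigma> then prof_add (Fin (unitv (c s))) ` PP \<sigma> \<tau> (Some (e s)) else {})"
proof -
  have ex: "\<exists>t. (Some s, t) \<in> \<sigma> \<union> \<tau>" using g s unfolding goodS_def by blast
  have succ: "{t. (Some s, t) \<in> \<sigma> \<union> \<tau>} = (if (Some s, None) \<in> \<sigma> then {None} else {})
      \<union> (if (Some s, Some (e s)) \<in> \<sigma> then {Some (e s)} else {})"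
    using F_V0[OF g t s] F_V0_targets[OF g t s] by auto
  have PN: "PP \<sigma> \<tau> None = {Fin (\<lambda>_. 0)}" using PP_None F_None[OF g t] by blast
  show ?thesis unfolding PP_step[OF ex] succ using PN by auto
qed

lemma pmax_V0:
  assumes g: "goodS \<sigma>" and t: "\<tau> \<in> T1" and s: "s \<in> V0"
  shows "prof_eq d (pmax d (PP \<sigma> \<tau> (Some s))) (hS \<sigma> s (pmax d (PP \<sigma> \<tau> (Some (e s)))))"
proof -
  let ?u = "Fin (unitv (c s))"
  let ?M = "pmax d (PP \<sigma> \<tau> (Some (e s)))"
  have es: "e s \<in> V" using e_prop s by blast
  have hM: "hasmax d (PP \<sigma> \<tau> (Some (e s))) ?M" using pmax_PP[OF g t es] .
  have hMu: "hasmax d (prof_add ?u ` PP \<sigma> \<tau> (Some (e s))) (prof_add ?u ?M)" using hasmax_add[OF hM] .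
  have hu: "hasmax d {?u} ?u" unfolding hasmax_def using ple_refl by simp
  have sgn: "pos d ?M \<or> neg d ?M" using PP_sign[OF g t es] hM unfolding hasmax_def by blast
  have ex: "\<exists>t. (Some s, t) \<in> \<sigma>" using g s unfolding goodS_def by blast
  then consider "(Some s, None) \<in> \<sigma>" "(Some s, Some (e s)) \<in> \<sigma>"
    | "(Some s, None) \<in> \<sigma>" "(Some s, Some (e s)) \<notin> \<sigma>"
    | "(Some s, None) \<notin> \<sigma>" "(Some s, Some (e s)) \<in> \<sigma>"
    using F_V0_targets[OF g t s] by blast
  then have "hasmax d (PP \<sigma> \<tau> (Some s)) (hS \<sigma> s ?M)"
  proof cases
    case 1
    have hU: "hasmax d ({?u} \<union> prof_add ?u ` PP \<sigma> \<tau> (Some (e s)))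
      (if prof_le d ?u (prof_add ?u ?M) then prof_add ?u ?M else ?u)" using hasmax_Un[OF hu hMu] .
    have "(if prof_le d ?u (prof_add ?u ?M) then prof_add ?u ?M else ?u) = hS \<sigma> s ?M"
    proof (cases "pos d ?M")
      case True then show ?thesis using 1 pos_zero_le unfolding hS_def by simp
    next
      case False then have "neg d ?M" using sgn by blast
      then have "\<not> prof_le d ?u (prof_add ?u ?M)" using neg_zero_less not_ple by blast
      then show ?thesis using 1 False unfolding hS_def by simp
    qed
    then show ?thesis using hU 1 PP_V0[OF g t s] by simp
  next
    case 2 then show ?thesis using hu PP_V0[OF g t s] unfolding hS_def by simp
  next
    case 3 then show ?thesis using hMu PP_V0[OF g t s] unfolding hS_def by simp
  qed
  then show ?thesis using hasmax_eq by blast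
qed

lemma val_V0:
  assumes g: "goodS \<sigma>" and s: "s \<in> V0"
  shows "prof_eq d (val \<sigma> (Some s)) (hS \<sigma> s (val \<sigma> (Some (e s))))"
proof -
  have ne: "T1 \<noteq> {}" using T1_ne by blast
  have "prof_eq d (pmin d ((\<lambda>\<tau>. pmax d (PP \<sigma> \<tau> (Some s))) ` T1))
     (hS \<sigma> s (pmin d ((\<lambda>\<tau>. pmax d (PP \<sigma> \<tau> (Some (e s)))) ` T1)))"
  proof (rule pmin_image_mono[OF T1_fin ne])
    show "\<And>p q. prof_le d p q \<Longrightarrow> prof_le d (hS \<sigma> s p) (hS \<sigma> s q)" by (rule hS_mono)
    show "\<And>t. t \<in> T1 \<Longrightarrow> prof_eq d (pmax d (PP \<sigma> t (Some s))) (hS \<sigma> s (pmax d (PP \<sigma> t (Some (e s)))))"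
      using pmax_V0[OF g _ s] by blast
  qed
  then show ?thesis unfolding val_Some .
qed

end


context G begin

lemma imp_local:
  assumes g: "goodS \<sigma>" and s: "s \<in> V0"
  shows "(Some s, None) \<in> improvements V E own c d \<sigma> \<longleftrightarrow>
           ((Some s, Some (e s)) \<notin> \<sigma> \<or> \<not> pos d (val \<sigma> (Some (e s))))"
    and "(Some s, Some (e s)) \<in> improvements V E own c d \<sigma> \<longleftrightarrow>
           ((Some s, None) \<notin> \<sigma> \<or> pos d (val \<sigma> (Some (e s))))"
    and "(Some s, None) \<in> strict_improvements V E own c d \<sigma> \<longleftrightarrow>
           ((Some s, None) \<notin> \<sigma> \<and> \<not> pos d (val \<sigma> (Some (e s))))"
    and "(Some s, Some (e s)) \<in> strict_improvements V E own c d \<sigma> \<longleftrightarrow>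
           ((Some s, Some (e s)) \<notin> \<sigma> \<and> pos d (val \<sigma> (Some (e s))))"
proof -
  let ?u = "Fin (unitv (c s))"
  let ?M = "val \<sigma> (Some (e s))"
  have es: "e s \<in> V" using e_prop s by blast
  have sg: "pos d ?M \<or> neg d ?M" using val_sign[OF g es] by blast
  have eqv: "prof_eq d (val \<sigma> (Some s)) (hS \<sigma> s ?M)" using val_V0[OF g s] .
  have E0a: "(Some s, None) \<in> E0 V E own" using s E0_char by blast
  have E0b: "(Some s, Some (e s)) \<in> E0 V E own" using s E0_char by blast
  have ex: "(Some s, None) \<in> \<sigma> \<or> (Some s, Some (e s)) \<in> \<sigma>"
    using g s F_V0_targets[OF g T1_ne s] unfolding goodS_def by blast
  have I1: "(Some s, None) \<in> improvements V E own c d \<sigma> \<longleftrightarrow> prof_le d (hS \<sigma> s ?M) ?u"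
    unfolding improvements_def using E0a ple_eq_left[OF eqv] val_None by simp
  have I2: "(Some s, Some (e s)) \<in> improvements V E own c d \<sigma> \<longleftrightarrow> prof_le d (hS \<sigma> s ?M) (prof_add ?u ?M)"
    unfolding improvements_def using E0b ple_eq_left[OF eqv] by simp
  have S1: "(Some s, None) \<in> strict_improvements V E own c d \<sigma> \<longleftrightarrow> prof_less d (hS \<sigma> s ?M) ?u"
    unfolding strict_improvements_def using E0a pl_eq_left[OF eqv] val_None by simp
  have S2: "(Some s, Some (e s)) \<in> strict_improvements V E own c d \<sigma> \<longleftrightarrow> prof_less d (hS \<sigma> s ?M) (prof_add ?u ?M)"
    unfolding strict_improvements_def using E0b pl_eq_left[OF eqv] by simp
  have A: "pos d ?M \<Longrightarrow> prof_less d ?u (prof_add ?u ?M)"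
  proof -
    assume "pos d ?M"
    then have "prof_less d (prof_add ?u (Fin (\<lambda>_. 0))) (prof_add ?u ?M)" using padd_less unfolding pos_def by blast
    then show ?thesis by simp
  qed
  have B: "neg d ?M \<Longrightarrow> prof_less d (prof_add ?u ?M) ?u" by (rule neg_zero_less)
  let ?a = "(Some s, Some (e s)) \<in> \<sigma>" and ?b = "(Some s, None) \<in> \<sigma>"
  have lr: "prof_le d ?u ?u" "prof_le d (prof_add ?u ?M) (prof_add ?u ?M)" using ple_refl by blast+
  have ir: "\<not> prof_less d ?u ?u" "\<not> prof_less d (prof_add ?u ?M) (prof_add ?u ?M)" using pl_irrefl by blast+
  have P: "prof_le d ?u (prof_add ?u ?M) \<and> \<not> prof_le d (prof_add ?u ?M) ?u \<and> prof_less d ?u (prof_add ?u ?M)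
     \<and> \<not> prof_less d (prof_add ?u ?M) ?u" if "pos d ?M"
    using A[OF that] not_ple pl_asym unfolding prof_le_def by blast
  have N: "prof_le d (prof_add ?u ?M) ?u \<and> \<not> prof_le d ?u (prof_add ?u ?M) \<and> prof_less d (prof_add ?u ?M) ?u
     \<and> \<not> prof_less d ?u (prof_add ?u ?M) \<and> \<not> pos d ?M" if "\<not> pos d ?M"
  proof -
    have "neg d ?M" using sg that by blast
    then show ?thesis using B not_ple pl_asym that unfolding prof_le_def by blast
  qed
  have hv: "hS \<sigma> s ?M = (if ?a \<and> ?b then (if pos d ?M then prof_add ?u ?M else ?u) else if ?a then prof_add ?u ?M else ?u)"
    unfolding hS_def by simp
  show "(Some s, None) \<in> improvements V E own c d \<sigma> \<longleftrightarrow>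
           ((Some s, Some (e s)) \<notin> \<sigma> \<or> \<not> pos d (val \<sigma> (Some (e s))))"
    unfolding I1 hv using P N lr ex by (cases "pos d ?M") auto
  show "(Some s, Some (e s)) \<in> improvements V E own c d \<sigma> \<longleftrightarrow>
           ((Some s, None) \<notin> \<sigma> \<or> pos d (val \<sigma> (Some (e s))))"
    unfolding I2 hv using P N lr ex by (cases "pos d ?M") auto
  show "(Some s, None) \<in> strict_improvements V E own c d \<sigma> \<longleftrightarrow>
           ((Some s, None) \<notin> \<sigma> \<and> \<not> pos d (val \<sigma> (Some (e s))))"
    unfolding S1 hv using P N ir ex by (cases "pos d ?M") auto
  show "(Some s, Some (e s)) \<in> strict_improvements V E own c d \<sigma> \<longleftrightarrow>
           ((Some s, Some (e s)) \<notin> \<sigma> \<and> pos d (val \<sigma> (Some (e s))))"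
    unfolding S2 hv using P N ir ex by (cases "pos d ?M") auto
qed

definition strat :: "'v set \<Rightarrow> 'v set \<Rightarrow> ('v option \<times> 'v option) set" where
  "strat A B = {(Some s, Some (e s)) | s. s \<in> B} \<union> {(Some s, None) | s. s \<in> V0 - A}"

lemma strat_stop: "(Some s, None) \<in> strat A B \<longleftrightarrow> s \<in> V0 - A"
  unfolding strat_def by simp
lemma strat_cont: "(Some s, Some (e s)) \<in> strat A B \<longleftrightarrow> s \<in> B"
  unfolding strat_def by simp

lemma strat_good: assumes "A \<subseteq> B" "B \<subseteq> V0" shows "goodS (strat A B)"
proof -
  have "strat A B \<subseteq> E0 V E own"
  proof
    fix p assume "p \<in> strat A B"
    then have "(\<exists>s\<in>B. p = (Some s, Some (e s))) \<or> (\<exists>s\<in>V0 - A. p = (Some s, None))" unfolding strat_def by auto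
    then obtain s where "s \<in> V0" "p = (Some s, Some (e s)) \<or> p = (Some s, None)" using assms by blast
    then show "p \<in> E0 V E own" using E0_char[of "Some s" "Some (e s)"] E0_char[of "Some s" None] by auto
  qed
  moreover have "\<forall>s\<in>V0. \<exists>t. (Some s, t) \<in> strat A B"
  proof
    fix s assume s: "s \<in> V0"
    show "\<exists>t. (Some s, t) \<in> strat A B"
    proof (cases "s \<in> A")
      case True then have "(Some s, Some (e s)) \<in> strat A B" using strat_cont assms by blast
      then show ?thesis by blast
    next
      case False then have "(Some s, None) \<in> strat A B" using strat_stop s by blast
      then show ?thesis by blast
    qed
  qed
  ultimately show ?thesis unfolding goodS_def by blast
qed

definition Xs :: "('v option \<times> 'v option) set \<Rightarrow> 'v set" where
  "Xs \<sigma> = {s \<in> V0. e s \<in> Pset \<sigma>}"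

lemma Xs_iff: "goodS \<sigma> \<Longrightarrow> s \<in> V0 \<Longrightarrow> s \<in> Xs \<sigma> \<longleftrightarrow> pos d (val \<sigma> (Some (e s)))"
proof -
  assume g: "goodS \<sigma>" and s: "s \<in> V0"
  have "e s \<in> V" using e_prop s by blast
  then have "pos d (val \<sigma> (Some (e s))) \<longleftrightarrow> e s \<in> Pset \<sigma>" using val_sign(2)[OF g] by blast
  then show ?thesis unfolding Xs_def using s by blast
qed

lemma E0_cases: "(x, t) \<in> E0 V E own \<Longrightarrow> (\<And>s. s \<in> V0 \<Longrightarrow> x = Some s \<Longrightarrow> t = None \<Longrightarrow> P) \<Longrightarrow>
   (\<And>s. s \<in> V0 \<Longrightarrow> x = Some s \<Longrightarrow> t = Some (e s) \<Longrightarrow> P) \<Longrightarrow> P"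
proof -
  assume "(x, t) \<in> E0 V E own"
    and 1: "\<And>s. s \<in> V0 \<Longrightarrow> x = Some s \<Longrightarrow> t = None \<Longrightarrow> P"
    and 2: "\<And>s. s \<in> V0 \<Longrightarrow> x = Some s \<Longrightarrow> t = Some (e s) \<Longrightarrow> P"
  then obtain s where "s \<in> V0" "x = Some s" "t = None \<or> t = Some (e s)" unfolding E0_char by blast
  then show P using 1 2 by blast
qed

lemma imp_strat:
  assumes AB: "A \<subseteq> B" "B \<subseteq> V0" and BX: "B \<subseteq> Xs (strat A B)"
  shows "improvements V E own c d (strat A B) = strat B (Xs (strat A B))"
    and "strict_improvements V E own c d (strat A B) = {(Some s, Some (e s)) | s. s \<in> Xs (strat A B) - B}"
proof -
  let ?X = "Xs (strat A B)"
  note g = strat_good[OF AB]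
  have XV: "?X \<subseteq> V0" unfolding Xs_def by blast
  show "improvements V E own c d (strat A B) = strat B ?X"
  proof (rule set_eqI, clarify)
    fix x t
    have L: "(x, t) \<in> improvements V E own c d (strat A B) \<Longrightarrow> (x, t) \<in> E0 V E own"
      unfolding improvements_def by blast
    have R: "(x, t) \<in> strat B ?X \<Longrightarrow> (x, t) \<in> E0 V E own"
      using strat_good[OF BX XV] unfolding goodS_def by blast
    show "(x, t) \<in> improvements V E own c d (strat A B) \<longleftrightarrow> (x, t) \<in> strat B ?X"
    proof (cases "(x, t) \<in> E0 V E own")
      case False then show ?thesis using L R by blast
    next
      case True
      then show ?thesis
      proof (rule E0_cases)
        fix s assume s: "s \<in> V0" "x = Some s" "t = None"
        have 1: "(Some s, None) \<in> improvements V E own c d (strat A B) \<longleftrightarrow> (s \<notin> B \<or> s \<notin> ?X)"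
          using imp_local(1)[OF g s(1)] strat_cont[of s A B] Xs_iff[OF g s(1)] by simp
        have 2: "(Some s, None) \<in> strat B ?X \<longleftrightarrow> s \<notin> B" using strat_stop[of s B ?X] s(1) by simp
        show ?thesis using 1 2 s(2,3) BX by blast
      next
        fix s assume s: "s \<in> V0" "x = Some s" "t = Some (e s)"
        have 1: "(Some s, Some (e s)) \<in> improvements V E own c d (strat A B) \<longleftrightarrow> (s \<in> A \<or> s \<in> ?X)"
          using imp_local(2)[OF g s(1)] strat_stop[of s A B] Xs_iff[OF g s(1)] s(1) by simp
        have 2: "(Some s, Some (e s)) \<in> strat B ?X \<longleftrightarrow> s \<in> ?X" using strat_cont[of s B ?X] by simp
        show ?thesis using 1 2 s(2,3) AB BX by blast
      qed
    qed
  qed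
  show "strict_improvements V E own c d (strat A B) = {(Some s, Some (e s)) | s. s \<in> ?X - B}"
  proof (rule set_eqI, clarify)
    fix x t
    have L: "(x, t) \<in> strict_improvements V E own c d (strat A B) \<Longrightarrow> (x, t) \<in> E0 V E own"
      unfolding strict_improvements_def by blast
    have R: "(x, t) \<in> {(Some s, Some (e s)) | s. s \<in> ?X - B} \<Longrightarrow> (x, t) \<in> E0 V E own"
      using XV E0_char by blast
    show "(x, t) \<in> strict_improvements V E own c d (strat A B) \<longleftrightarrow> (x, t) \<in> {(Some s, Some (e s)) | s. s \<in> ?X - B}"
    proof (cases "(x, t) \<in> E0 V E own")
      case False then show ?thesis using L R by blast
    next
      case True
      then show ?thesis
      proof (rule E0_cases)
        fix s assume s: "s \<in> V0" "x = Some s" "t = None"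
        have 1: "(Some s, None) \<in> strict_improvements V E own c d (strat A B) \<longleftrightarrow> (s \<in> A \<and> s \<notin> ?X)"
          using imp_local(3)[OF g s(1)] strat_stop[of s A B] Xs_iff[OF g s(1)] s(1) by simp
        show ?thesis using 1 s(2,3) AB BX by blast
      next
        fix s assume s: "s \<in> V0" "x = Some s" "t = Some (e s)"
        have 1: "(Some s, Some (e s)) \<in> strict_improvements V E own c d (strat A B) \<longleftrightarrow> (s \<notin> B \<and> s \<in> ?X)"
          using imp_local(4)[OF g s(1)] strat_cont[of s A B] Xs_iff[OF g s(1)] by simp
        have 2: "(Some s, Some (e s)) \<in> {(Some s, Some (e s)) | s. s \<in> ?X - B} \<longleftrightarrow> s \<in> ?X - B"
          by auto
        show ?thesis using 1 2 s(2,3) by blast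
      qed
    qed
  qed
qed

end


context G begin

lemma E0_stop: "(Some a, None) \<in> E0 V E own \<Longrightarrow> a \<in> V0"
  using E0_char by blast

lemma E0_cont: "(Some a, Some b) \<in> E0 V E own \<Longrightarrow> a \<in> V0 \<and> b = e a"
proof -
  assume "(Some a, Some b) \<in> E0 V E own"
  then obtain s where "s \<in> V0" "Some a = Some s" "Some b = None \<or> Some b = Some (e s)" unfolding E0_char by blast
  then show ?thesis by simp
qed

lemma F_E: assumes g: "goodS \<sigma>" and t: "\<tau> \<in> T1" and ab: "(Some a, Some b) \<in> \<sigma> \<union> \<tau>"
  shows "(a, b) \<in> E"
proof (cases "(Some a, Some b) \<in> \<sigma>")
  case True
  then have "(Some a, Some b) \<in> E0 V E own" using g unfolding goodS_def by blast
  then have "a \<in> V0" "b = e a" using E0_cont by blast+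
  then show ?thesis using e_prop by blast
next
  case False
  then have "(Some a, Some b) \<in> E1 V E own" using ab t unfolding T1_char by blast
  then show ?thesis unfolding E1_char by blast
qed

lemma F_stop: assumes g: "goodS \<sigma>" and t: "\<tau> \<in> T1" and ab: "(Some a, None) \<in> \<sigma> \<union> \<tau>"
  shows "(Some a, None) \<in> \<sigma> \<and> a \<in> V0"
proof -
  have "(Some a, None) \<notin> \<tau>"
  proof
    assume "(Some a, None) \<in> \<tau>" then have "(Some a, None) \<in> E1 V E own" using t unfolding T1_char by blast
    then show False unfolding E1_char by blast
  qed
  then have "(Some a, None) \<in> \<sigma>" using ab by blast
  then show ?thesis using g E0_stop unfolding goodS_def by blast
qed

lemma fin_play_decomp:
  assumes g: "goodS \<sigma>" and t: "\<tau> \<in> T1" and v: "v \<in> V" and fp: "fin_play (\<sigma> \<union> \<tau>) (Some v) xs"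
  obtains ys s where "xs = ys @ [None]" "ys \<noteq> []" "hd ys = Some v" "set ys \<subseteq> Some ` V"
    "last ys = Some s" "(Some s, None) \<in> \<sigma>" "s \<in> V0"
    "\<And>i. Suc i < length ys \<Longrightarrow> (ys ! i, ys ! Suc i) \<in> \<sigma> \<union> \<tau>"
    "cols c xs = cols c ys"
proof -
  note st = fin_play_struct[OF g t v fp]
  define ys where "ys = butlast xs"
  have xs: "xs = ys @ [None]" unfolding ys_def using st(1,2)
    by (metis append_butlast_last_id list.size(3) not_numeral_le_zero)
  have len: "length ys = length xs - 1" unfolding ys_def by simp
  have yne: "ys \<noteq> []" using len st(1) by auto
  have ysi: "ys ! i = xs ! i" if "i < length ys" for i using xs that by (simp add: nth_append)
  have hd: "hd ys = Some v" using fp yne xs unfolding fin_play_def by (cases ys) auto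
  have sub: "set ys \<subseteq> Some ` V"
  proof
    fix x assume "x \<in> set ys"
    then obtain i where i: "i < length ys" "x = ys ! i" by (metis in_set_conv_nth)
    then obtain w where "w \<in> V" "xs ! i = Some w" using st(3)[of i] len by auto
    then show "x \<in> Some ` V" using i ysi by auto
  qed
  obtain s where s: "last ys = Some s" "s \<in> V" using sub yne by (metis imageE last_in_set subsetD)
  have edge: "(ys ! i, ys ! Suc i) \<in> \<sigma> \<union> \<tau>" if "Suc i < length ys" for i
    using fp that ysi xs unfolding fin_play_def by (metis Suc_lessD len less_diff_conv add_lessD1 length_append_singleton)
  have "(last ys, None) \<in> \<sigma> \<union> \<tau>"
  proof -
    have "Suc (length ys - 1) < length xs" using xs yne by simp
    then have "(xs ! (length ys - 1), xs ! Suc (length ys - 1)) \<in> \<sigma> \<union> \<tau>" using fp unfolding fin_play_def by blast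
    moreover have "xs ! (length ys - 1) = last ys" using xs yne by (simp add: nth_append last_conv_nth)
    moreover have "xs ! Suc (length ys - 1) = None" using xs yne by (simp add: nth_append)
    ultimately show ?thesis by simp
  qed
  then have "(Some s, None) \<in> \<sigma> \<union> \<tau>" using s by simp
  then have "(Some s, None) \<in> \<sigma> \<and> s \<in> V0" using F_stop[OF g t] by blast
  moreover have "cols c xs = cols c ys" unfolding xs by (simp only: cols_append cols_None Un_empty_right)
  ultimately show ?thesis using that xs yne hd sub s edge by blast
qed

lemma cont_of_no_stop: assumes g': "goodS \<sigma>'" and s: "s \<in> V0" and ns: "(Some s, None) \<notin> \<sigma>'"
  shows "(Some s, Some (e s)) \<in> \<sigma>'"
proof -
  obtain t where "(Some s, t) \<in> \<sigma>'" using g' s unfolding goodS_def by blast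
  moreover have "t = None \<or> t = Some (e s)" using F_V0_targets[OF g' T1_ne s] calculation by blast
  ultimately show ?thesis using ns by auto
qed

lemma pos_even_union:
  assumes "finite A" "A \<noteq> {}" "finite B" "B \<noteq> {}" "even (Max A)" "even (Max B)"
  shows "even (Max (A \<union> B))"
proof -
  have "Max (A \<union> B) = max (Max A) (Max B)" using assms Max_Un by blast
  then show ?thesis using assms by (simp add: max_def)
qed

lemma fin_pos_iff:
  assumes g: "goodS \<sigma>" and t: "\<tau> \<in> T1" and v: "v \<in> V" and fp: "fin_play (\<sigma> \<union> \<tau>) (Some v) xs"
  shows "pos d (fin_prof c xs) \<longleftrightarrow> even (Max (cols c xs))"
  using fin_prof_sign(1) fin_play_cols[OF g t v fp] by blast

context
  fixes \<sigma> \<sigma>' \<tau>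
  assumes g: "goodS \<sigma>" and g': "goodS \<sigma>'" and t: "\<tau> \<in> T1"
    and H1: "\<forall>s\<in>V0. (Some s, Some (e s)) \<in> \<sigma> \<longrightarrow> (Some s, Some (e s)) \<in> \<sigma>'"
    and H2: "\<forall>s\<in>V0. (Some s, None) \<in> \<sigma> \<and> (Some s, None) \<notin> \<sigma>' \<longrightarrow> e s \<in> Pset \<sigma>"
begin

lemma transfer:
  assumes "(Some a, Some b) \<in> \<sigma> \<union> \<tau>" shows "(Some a, Some b) \<in> \<sigma>' \<union> \<tau>"
proof (cases "(Some a, Some b) \<in> \<sigma>")
  case True
  then have "(Some a, Some b) \<in> E0 V E own" using g unfolding goodS_def by blast
  then have "a \<in> V0" "b = e a" using E0_cont by blast+
  then show ?thesis using H1 True by blast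
next
  case False then show ?thesis using assms by blast
qed

lemma transfer':
  assumes "(x, y) \<in> \<sigma> \<union> \<tau>" "x \<in> Some ` V" "y \<in> Some ` V" shows "(x, y) \<in> \<sigma>' \<union> \<tau>"
  using assms transfer by blast

lemma mono_step:
  assumes w: "w \<in> Pset \<sigma>" and bad: "\<not> (\<exists>p\<in>PP \<sigma>' \<tau> (Some w). pos d p)"
  shows "\<exists>ys s. ys \<noteq> [] \<and> hd ys = Some w \<and> set ys \<subseteq> Some ` V
    \<and> (\<forall>i. Suc i < length ys \<longrightarrow> (ys ! i, ys ! Suc i) \<in> \<sigma>' \<union> \<tau>)
    \<and> last ys = Some s \<and> s \<in> V0 \<and> (Some s, Some (e s)) \<in> \<sigma>' \<and> even (Max (cols c ys))
    \<and> e s \<in> Pset \<sigma> \<and> \<not> (\<exists>p\<in>PP \<sigma>' \<tau> (Some (e s)). pos d p)"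
proof -
  have wV: "w \<in> V" using w unfolding Pset_def by blast
  obtain p where p: "p \<in> PP \<sigma> \<tau> (Some w)" "pos d p" using w t unfolding Pset_def by blast
  show ?thesis
  using p(1)
  proof (rule PP_cases)
    fix f assume f: "inf_play (\<sigma> \<union> \<tau>) (Some w) f" "p = inf_prof c f"
    have "inf_play (\<sigma>' \<union> \<tau>) (Some w) f"
      unfolding inf_play_def
    proof (intro conjI allI)
      show "f 0 = Some w" using f unfolding inf_play_def by blast
      fix n
      have "(f n, f (Suc n)) \<in> \<sigma> \<union> \<tau>" using f unfolding inf_play_def by blast
      moreover have "f n \<in> Some ` V" "f (Suc n) \<in> Some ` V" using inf_play_struct[OF g t wV f(1)] by blast+
      ultimately show "(f n, f (Suc n)) \<in> \<sigma>' \<union> \<tau>" using transfer' by blast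
    qed
    then have "p \<in> PP \<sigma>' \<tau> (Some w)" using f(2) PP_infI by blast
    then show ?thesis using bad p(2) by blast
  next
    fix xs assume xs: "fin_play (\<sigma> \<union> \<tau>) (Some w) xs" "p = fin_prof c xs"
    obtain ys s where ys: "xs = ys @ [None]" "ys \<noteq> []" "hd ys = Some w" "set ys \<subseteq> Some ` V"
      "last ys = Some s" "(Some s, None) \<in> \<sigma>" "s \<in> V0"
      "\<And>i. Suc i < length ys \<Longrightarrow> (ys ! i, ys ! Suc i) \<in> \<sigma> \<union> \<tau>" "cols c xs = cols c ys"
      using fin_play_decomp[OF g t wV xs(1)] by blast
    have ev: "even (Max (cols c ys))" using fin_pos_iff[OF g t wV xs(1)] p(2) xs(2) ys(9) by simp
    have cc: "finite (cols c ys)" "cols c ys \<noteq> {}" using fin_play_cols[OF g t wV xs(1)] ys(9) by auto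
    have ed': "(ys ! i, ys ! Suc i) \<in> \<sigma>' \<union> \<tau>" if "Suc i < length ys" for i
    proof -
      have "ys ! i \<in> Some ` V" "ys ! Suc i \<in> Some ` V" using ys(4) that by auto
      then show ?thesis using transfer' ys(8)[OF that] by blast
    qed
    have lastidx: "ys ! (length ys - 1) = Some s" using ys(2,5) by (simp add: last_conv_nth)
    have ns: "(Some s, None) \<notin> \<sigma>'"
    proof
      assume st: "(Some s, None) \<in> \<sigma>'"
      have "fin_play (\<sigma>' \<union> \<tau>) (Some w) xs"
        unfolding fin_play_def
      proof (intro conjI allI impI)
        show "xs \<noteq> []" "hd xs = Some w" using xs(1) unfolding fin_play_def by blast+
      next
        fix i assume i: "Suc i < length xs"
        show "(xs ! i, xs ! Suc i) \<in> \<sigma>' \<union> \<tau>"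
        proof (cases "Suc i < length ys")
          case True then show ?thesis using ed' ys(1) by (simp add: nth_append)
        next
          case False
          then have "i = length ys - 1" using i ys(1) by simp
          then have "xs ! i = Some s" "xs ! Suc i = None" using ys(1,2) lastidx by (simp_all add: nth_append)
          then show ?thesis using st by simp
        qed
      next
        fix t' show "(last xs, t') \<notin> \<sigma>' \<union> \<tau>" using ys(1) F_None[OF g' t] by simp
      qed
      then have "p \<in> PP \<sigma>' \<tau> (Some w)" using xs(2) PP_finI by blast
      then show False using bad p(2) by blast
    qed
    have cont: "(Some s, Some (e s)) \<in> \<sigma>'" using cont_of_no_stop[OF g' ys(7) ns] .
    have esP: "e s \<in> Pset \<sigma>" using H2 ys(6,7) ns by blast
    have esV: "e s \<in> V" using e_prop ys(7) by blast
    have bad': "\<not> (\<exists>p\<in>PP \<sigma>' \<tau> (Some (e s)). pos d p)"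
    proof
      assume "\<exists>p\<in>PP \<sigma>' \<tau> (Some (e s)). pos d p"
      then obtain q where q: "q \<in> PP \<sigma>' \<tau> (Some (e s))" "pos d q" by blast
      show False
      using q(1)
      proof (rule PP_cases)
        fix zs assume zs: "fin_play (\<sigma>' \<union> \<tau>) (Some (e s)) zs" "q = fin_prof c zs"
        have z0: "zs \<noteq> []" "hd zs = Some (e s)" using zs(1) unfolding fin_play_def by blast+
        have fp: "fin_play (\<sigma>' \<union> \<tau>) (Some w) (ys @ zs)"
          unfolding fin_play_def
        proof (intro conjI allI impI)
          show "ys @ zs \<noteq> []" using ys(2) by simp
          show "hd (ys @ zs) = Some w" using ys(2,3) by simp
        next
          fix i assume i: "Suc i < length (ys @ zs)"
          show "((ys @ zs) ! i, (ys @ zs) ! Suc i) \<in> \<sigma>' \<union> \<tau>"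
          proof (cases "Suc i < length ys")
            case True then show ?thesis using ed' by (simp add: nth_append)
          next
            case False
            show ?thesis
            proof (cases "i = length ys - 1")
              case True
              then have "(ys @ zs) ! i = Some s" "(ys @ zs) ! Suc i = Some (e s)"
                using ys(2) lastidx z0 by (simp_all add: nth_append hd_conv_nth)
              then show ?thesis using cont by simp
            next
              case F2: False
              then have "i \<ge> length ys" using False by simp
              then have "Suc (i - length ys) < length zs" using i by simp
              then have "(zs ! (i - length ys), zs ! Suc (i - length ys)) \<in> \<sigma>' \<union> \<tau>"
                using zs(1) unfolding fin_play_def by blast
              moreover have "Suc i - length ys = Suc (i - length ys)" using \<open>i \<ge> length ys\<close> by simp
              ultimately show ?thesis using \<open>i \<ge> length ys\<close> by (simp add: nth_append)
            qed
          qed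
        next
          fix t' show "(last (ys @ zs), t') \<notin> \<sigma>' \<union> \<tau>" using z0 zs(1) unfolding fin_play_def by simp
        qed
        have zc: "finite (cols c zs)" "cols c zs \<noteq> {}" using fin_play_cols[OF g' t esV zs(1)] by auto
        have "even (Max (cols c zs))" using fin_pos_iff[OF g' t esV zs(1)] q(2) zs(2) by simp
        then have "even (Max (cols c (ys @ zs)))" unfolding cols_append
          using pos_even_union cc zc ev by blast
        then have "pos d (fin_prof c (ys @ zs))" using fin_pos_iff[OF g' t wV fp] by simp
        then show False using bad fp PP_finI by blast
      next
        fix h assume h: "inf_play (\<sigma>' \<union> \<tau>) (Some (e s)) h" "q = inf_prof c h"
        define k where "k = length ys"
        define f where "f n = (if n < k then ys ! n else h (n - k))" for n
        have ip: "inf_play (\<sigma>' \<union> \<tau>) (Some w) f"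
          unfolding inf_play_def
        proof (intro conjI allI)
          show "f 0 = Some w" unfolding f_def k_def using ys(2,3) by (simp add: hd_conv_nth)
          fix n
          show "(f n, f (Suc n)) \<in> \<sigma>' \<union> \<tau>"
          proof (cases "Suc n < k")
            case True then show ?thesis unfolding f_def k_def using ed' by simp
          next
            case False
            show ?thesis
            proof (cases "n = k - 1")
              case True
              then have "f n = Some s" "f (Suc n) = Some (e s)" unfolding f_def k_def
                using ys(2) lastidx h(1) unfolding inf_play_def by auto
              then show ?thesis using cont by simp
            next
              case F2: False
              then have "n \<ge> k" using False by simp
              then have "f n = h (n - k)" "f (Suc n) = h (Suc (n - k))" unfolding f_def by (simp_all add: Suc_diff_le)
              then show ?thesis using h(1) unfolding inf_play_def by simp
            qed
          qed
        qed
        have "(\<lambda>i. the (f i)) = (\<lambda>n. if n < k then the (ys ! n) else the (h (n - k)))" unfolding f_def by auto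
        then have "infc c (\<lambda>i. the (f i)) = infc c (\<lambda>i. the (h i))" using infc_prefix by simp
        then have "inf_prof c f = inf_prof c h" unfolding inf_prof_def parity_infc by simp
        then have "pos d (inf_prof c f)" using q(2) h(2) by simp
        then show False using bad ip PP_infI by blast
      qed
    qed
    show ?thesis using ys(2,3,4,5,7) ed' cont ev esP bad' by blast
  qed
qed

end

lemma MONO:
  assumes g: "goodS \<sigma>" and g': "goodS \<sigma>'"
    and H1: "\<forall>s\<in>V0. (Some s, Some (e s)) \<in> \<sigma> \<longrightarrow> (Some s, Some (e s)) \<in> \<sigma>'"
    and H2: "\<forall>s\<in>V0. (Some s, None) \<in> \<sigma> \<and> (Some s, None) \<notin> \<sigma>' \<longrightarrow> e s \<in> Pset \<sigma>"
  shows "Pset \<sigma> \<subseteq> Pset \<sigma>'"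
proof
  fix v assume v: "v \<in> Pset \<sigma>"
  have vV: "v \<in> V" using v unfolding Pset_def by blast
  have "\<forall>\<tau>\<in>T1. \<exists>p\<in>PP \<sigma>' \<tau> (Some v). pos d p"
  proof
    fix \<tau> assume t: "\<tau> \<in> T1"
    show "\<exists>p\<in>PP \<sigma>' \<tau> (Some v). pos d p"
    proof (rule ccontr)
      assume bad0: "\<not> (\<exists>p\<in>PP \<sigma>' \<tau> (Some v). pos d p)"
      define Bd where "Bd w \<longleftrightarrow> w \<in> Pset \<sigma> \<and> \<not> (\<exists>p\<in>PP \<sigma>' \<tau> (Some w). pos d p)" for w
      define Pr where "Pr w ys s \<longleftrightarrow> ys \<noteq> [] \<and> hd ys = Some w \<and> set ys \<subseteq> Some ` V
        \<and> (\<forall>i. Suc i < length ys \<longrightarrow> (ys ! i, ys ! Suc i) \<in> \<sigma>' \<union> \<tau>)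
        \<and> last ys = Some s \<and> s \<in> V0 \<and> (Some s, Some (e s)) \<in> \<sigma>' \<and> even (Max (cols c ys))
        \<and> Bd (e s)" for w ys s
      have stp: "Bd w \<Longrightarrow> \<exists>ys s. Pr w ys s" for w
        unfolding Bd_def Pr_def using mono_step[OF g g' t H1 H2] by blast
      define nx where "nx w = (SOME ys_s. Pr w (fst ys_s) (snd ys_s))" for w
      have nxP: "Bd w \<Longrightarrow> Pr w (fst (nx w)) (snd (nx w))" for w
      proof -
        assume "Bd w"
        then obtain ys s where "Pr w ys s" using stp by blast
        then have "\<exists>ys_s. Pr w (fst ys_s) (snd ys_s)" by (intro exI[of _ "(ys, s)"]) simp
        then show ?thesis unfolding nx_def by (rule someI_ex)
      qed
      define ws where "ws k = ((\<lambda>w. e (snd (nx w))) ^^ k) v" for k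
      have ws0: "ws 0 = v" unfolding ws_def by simp
      have wsS: "ws (Suc k) = e (snd (nx (ws k)))" for k unfolding ws_def by simp
      have Bdk: "Bd (ws k)" for k
      proof (induction k)
        case 0 then show ?case using ws0 v bad0 unfolding Bd_def by simp
      next
        case (Suc k) then show ?case using nxP[OF Suc] wsS unfolding Pr_def by simp
      qed
      define L where "L k = fst (nx (ws k))" for k
      have PrL: "Pr (ws k) (L k) (snd (nx (ws k)))" for k using nxP[OF Bdk] unfolding L_def by blast
      have Lne: "L k \<noteq> []" for k using PrL unfolding Pr_def by blast
      have ipc: "inf_play (\<sigma>' \<union> \<tau>) (Some v) (conc L)"
        unfolding inf_play_def
      proof (intro conjI allI)
        show "conc L 0 = Some v" using conc_0[OF Lne] PrL[of 0] ws0 unfolding Pr_def by simp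
        fix n
        show "(conc L n, conc L (Suc n)) \<in> \<sigma>' \<union> \<tau>"
        proof (rule conc_edges[OF Lne])
          show "\<And>k i. Suc i < length (L k) \<Longrightarrow> (L k ! i, L k ! Suc i) \<in> \<sigma>' \<union> \<tau>"
            using PrL unfolding Pr_def by blast
          fix k
          have "last (L k) = Some (snd (nx (ws k)))" "(Some (snd (nx (ws k))), Some (e (snd (nx (ws k))))) \<in> \<sigma>'"
            using PrL[of k] unfolding Pr_def by blast+
          moreover have "hd (L (Suc k)) = Some (e (snd (nx (ws k))))" using PrL[of "Suc k"] wsS unfolding Pr_def by simp
          ultimately show "(last (L k), hd (L (Suc k))) \<in> \<sigma>' \<union> \<tau>" by simp
        qed
      qed
      have rng: "conc L n \<in> Some ` V" for n
        using conc_range[of L n, OF Lne] PrL unfolding Pr_def by blast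
      have fin: "finite (range (\<lambda>n. c (the (conc L n))))"
      proof -
        have "range (\<lambda>n. c (the (conc L n))) \<subseteq> c ` V"
        proof
          fix x assume "x \<in> range (\<lambda>n. c (the (conc L n)))"
          then obtain n where n: "x = c (the (conc L n))" by blast
          obtain w where "w \<in> V" "conc L n = Some w" using rng[of n] by blast
          then show "x \<in> c ` V" using n by simp
        qed
        then show ?thesis using finV finite_subset by blast
      qed
      have "even (Max (infc (\<lambda>x. c (the x)) (conc L)))"
      proof (rule conc_parity[OF Lne])
        show "finite (range (\<lambda>n. c (the (conc L n))))" by (rule fin)
        fix k
        have "(\<lambda>x. c (the x)) ` set (L k) = cols c (L k)" using PrL[of k] cols_the unfolding Pr_def by blast
        then show "even (Max ((\<lambda>x. c (the x)) ` set (L k)))" using PrL[of k] unfolding Pr_def by simp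
      qed
      moreover have "infc (\<lambda>x. c (the x)) (conc L) = infc c (\<lambda>i. the (conc L i))" unfolding infc_def by simp
      ultimately have "inf_prof c (conc L) = PosInf" unfolding inf_prof_def parity_infc by simp
      then have "PosInf \<in> PP \<sigma>' \<tau> (Some v)" using ipc PP_infI by metis
      then show False using bad0 pos_PosInf by blast
    qed
  qed
  then show "v \<in> Pset \<sigma>'" unfolding Pset_def using vV by blast
qed

end


context G begin

definition W :: "'v set" where
  "W = {v \<in> V. \<forall>g. g 0 = v \<and> (\<forall>i. (g i, g (Suc i)) \<in> E) \<longrightarrow> parity_win0 c g}"

lemma path_V: assumes "g 0 \<in> V" "\<forall>i. (g i, g (Suc i)) \<in> E" shows "g i \<in> V"
proof (cases i)
  case 0 then show ?thesis using assms by simp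
next
  case (Suc j) then show ?thesis using assms(2) EV by blast
qed

lemma W0_W: "W0 V E own c \<subseteq> W"
proof
  fix s assume s: "s \<in> W0 V E own c"
  then have sV: "s \<in> V" unfolding W0_def by blast
  obtain g0 where g0: "strategy0_hist V E own g0" "\<forall>f. consistent_play V E own g0 s f \<longrightarrow> parity_win0 c f"
    using s unfolding W0_def by blast
  have "parity_win0 c f" if f: "f 0 = s" "\<forall>i. (f i, f (Suc i)) \<in> E" for f
  proof -
    have fV: "f i \<in> V" for i using path_V[of f i] f sV by simp
    have "consistent_play V E own g0 s f"
      unfolding consistent_play_def
    proof (intro conjI allI impI)
      show "f 0 = s" using f by simp
      fix i show "(f i, f (Suc i)) \<in> E" using f by simp
    next
      fix i assume o: "own (f i) = 0"
      define h where "h = map f [0..<Suc i]"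
      have hne: "h \<noteq> []" unfolding h_def by simp
      have hl: "last h = f i" unfolding h_def by simp
      have hV: "set h \<subseteq> V" unfolding h_def using fV by auto
      have "\<forall>h. h \<noteq> [] \<longrightarrow> set h \<subseteq> V \<longrightarrow> own (last h) = 0 \<longrightarrow> (last h, g0 h) \<in> E"
        using g0(1) unfolding strategy0_hist_def by blast
      then have "(last h, g0 h) \<in> E" using hne hV o hl by metis
      moreover have "f i \<in> V0" using fV o unfolding Vown_def by simp
      ultimately have "g0 h = e (f i)" using e_uniq hl by simp
      moreover have "f (Suc i) = e (f i)" using e_uniq \<open>f i \<in> V0\<close> f(2) by simp
      ultimately show "f (Suc i) = g0 (map f [0..<Suc i])" unfolding h_def by simp
    qed
    then show ?thesis using g0(2) by blast
  qed
  then show "s \<in> W" unfolding W_def using sV by blast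
qed

lemma W_closed: assumes v: "v \<in> W" and vw: "(v, w) \<in> E" shows "w \<in> W"
proof -
  have wV: "w \<in> V" using vw EV by blast
  have "parity_win0 c g" if g: "g 0 = w" "\<forall>i. (g i, g (Suc i)) \<in> E" for g
  proof -
    define g' where "g' = case_nat v g"
    have "g' 0 = v" "\<forall>i. (g' i, g' (Suc i)) \<in> E" unfolding g'_def using g vw by (auto split: nat.splits)
    then have "parity_win0 c g'" using v unfolding W_def by blast
    moreover have "infc c (\<lambda>i. g' (Suc i)) = infc c g'" by (rule infc_Suc)
    moreover have "(\<lambda>i. g' (Suc i)) = g" unfolding g'_def by simp
    ultimately show ?thesis unfolding parity_infc by simp
  qed
  then show ?thesis unfolding W_def using wV by blast
qed

lemma list_path_W:
  assumes h: "hd ys = Some w0" "w0 \<in> W" "ys \<noteq> []" and sub: "set ys \<subseteq> Some ` V"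
    and ed: "\<And>i. Suc i < length ys \<Longrightarrow> (the (ys ! i), the (ys ! Suc i)) \<in> E"
  shows "i < length ys \<Longrightarrow> the (ys ! i) \<in> W"
proof (induction i)
  case 0 then show ?case using h by (simp add: hd_conv_nth[symmetric])
next
  case (Suc i) then show ?case using ed W_closed by simp
qed

lemma strat_sub: "A \<subseteq> B \<Longrightarrow> strat B B \<subseteq> strat A B"
  unfolding strat_def by blast

lemma opt_core:
  assumes AB: "A \<subseteq> B" "B \<subseteq> V0" and XB: "Xs (strat A B) \<subseteq> B"
  shows "W \<inter> V0 \<subseteq> B"
proof (rule ccontr)
  assume "\<not> W \<inter> V0 \<subseteq> B"
  then obtain s0 where s0: "s0 \<in> W \<inter> V0 - B" by blast
  let ?\<sigma> = "strat A B" and ?\<sigma>2 = "strat B B"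
  have g: "goodS ?\<sigma>" using strat_good AB by blast
  have g2: "goodS ?\<sigma>2" using strat_good AB by blast
  have sub2: "?\<sigma>2 \<subseteq> ?\<sigma>" using strat_sub AB by blast
  define Pr where "Pr s ys s' \<longleftrightarrow> ys \<noteq> [] \<and> hd ys = Some (e s) \<and> set ys \<subseteq> Some ` V
      \<and> (\<forall>i. Suc i < length ys \<longrightarrow> (the (ys ! i), the (ys ! Suc i)) \<in> E)
      \<and> last ys = Some s' \<and> s' \<in> W \<inter> V0 - B \<and> odd (Max (cols c ys))" for s ys s'
  have stp: "\<exists>ys s'. Pr s ys s'" if s: "s \<in> W \<inter> V0 - B" for s
  proof -
    have sV0: "s \<in> V0" using s by blast
    have esV: "e s \<in> V" using e_prop sV0 by blast
    have esW: "e s \<in> W" using W_closed e_prop sV0 s by blast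
    have "s \<notin> Xs ?\<sigma>" using s XB by blast
    then have "e s \<notin> Pset ?\<sigma>" unfolding Xs_def using sV0 by blast
    then obtain \<tau> where t: "\<tau> \<in> T1" and np: "\<forall>p\<in>PP ?\<sigma> \<tau> (Some (e s)). \<not> pos d p"
      unfolding Pset_def using esV by blast
    have F2: "?\<sigma>2 \<union> \<tau> \<subseteq> ?\<sigma> \<union> \<tau>" using sub2 by blast
    consider xs where "fin_play (?\<sigma>2 \<union> \<tau>) (Some (e s)) xs" | f where "inf_play (?\<sigma>2 \<union> \<tau>) (Some (e s)) f"
      using play_exists by blast
    then show ?thesis
    proof cases
      case 1
      obtain ys s' where ys: "xs = ys @ [None]" "ys \<noteq> []" "hd ys = Some (e s)" "set ys \<subseteq> Some ` V"
        "last ys = Some s'" "(Some s', None) \<in> ?\<sigma>2" "s' \<in> V0"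
        "\<And>i. Suc i < length ys \<Longrightarrow> (ys ! i, ys ! Suc i) \<in> ?\<sigma>2 \<union> \<tau>" "cols c xs = cols c ys"
        using fin_play_decomp[OF g2 t esV 1] by blast
      have fp: "fin_play (?\<sigma> \<union> \<tau>) (Some (e s)) xs"
        using 1 F2 F_None[OF g t] ys(1) unfolding fin_play_def by auto
      have "\<not> pos d (fin_prof c xs)" using np fp PP_finI by blast
      then have odd: "odd (Max (cols c ys))" using fin_pos_iff[OF g t esV fp] ys(9) by simp
      have edE: "(the (ys ! i), the (ys ! Suc i)) \<in> E" if i: "Suc i < length ys" for i
      proof -
        obtain a b where "ys ! i = Some a" "ys ! Suc i = Some b" using ys(4) i
          by (metis Suc_lessD imageE nth_mem subsetD)
        then show ?thesis using F_E[OF g2 t] ys(8)[OF i] by simp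
      qed
      have "the (ys ! (length ys - 1)) \<in> W"
        using list_path_W[OF ys(3) esW ys(2,4) edE] ys(2) by simp
      then have "s' \<in> W" using ys(2,5) by (simp add: last_conv_nth)
      moreover have "s' \<notin> B" using ys(6) strat_stop by blast
      ultimately have "Pr s ys s'" unfolding Pr_def using ys edE odd by blast
      then show ?thesis by blast
    next
      case 2
      then have ip: "inf_play (?\<sigma> \<union> \<tau>) (Some (e s)) f" using F2 unfolding inf_play_def by blast
      obtain g where gf: "\<And>n. f n = Some (g n)" "\<And>n. g n \<in> V"
        using inf_play_struct[OF g2 t esV 2] by metis
      have "g 0 = e s" "\<forall>i. (g i, g (Suc i)) \<in> E" using 2 gf F_E[OF g2 t] unfolding inf_play_def by auto
      then have "parity_win0 c g" using esW unfolding W_def by blast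
      moreover have "(\<lambda>i. the (f i)) = g" using gf by simp
      ultimately have "inf_prof c f = PosInf" unfolding inf_prof_def by simp
      then show ?thesis using np ip PP_infI pos_PosInf by metis
    qed
  qed
  define nx where "nx s = (SOME ys_s. Pr s (fst ys_s) (snd ys_s))" for s
  have nxP: "s \<in> W \<inter> V0 - B \<Longrightarrow> Pr s (fst (nx s)) (snd (nx s))" for s
  proof -
    assume "s \<in> W \<inter> V0 - B"
    then obtain ys s' where "Pr s ys s'" using stp by blast
    then have "\<exists>ys_s. Pr s (fst ys_s) (snd ys_s)" by (intro exI[of _ "(ys, s')"]) simp
    then show ?thesis unfolding nx_def by (rule someI_ex)
  qed
  define ss where "ss k = ((\<lambda>s. snd (nx s)) ^^ k) s0" for k
  have ssS: "ss (Suc k) = snd (nx (ss k))" for k unfolding ss_def by simp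
  have ssY: "ss k \<in> W \<inter> V0 - B" for k
  proof (induction k)
    case 0 then show ?case using s0 unfolding ss_def by simp
  next
    case (Suc k) then show ?case using nxP[OF Suc] ssS unfolding Pr_def by simp
  qed
  define L where "L k = fst (nx (ss k))" for k
  have PrL: "Pr (ss k) (L k) (ss (Suc k))" for k using nxP[OF ssY] ssS unfolding L_def by simp
  have Lne: "L k \<noteq> []" for k using PrL unfolding Pr_def by blast
  define g where "g n = the (conc L n)" for n
  have rng: "conc L n \<in> Some ` V" for n
    using conc_range[of L n, OF Lne] PrL unfolding Pr_def by blast
  have g0: "g 0 = e s0"
    using conc_0[of L, OF Lne] PrL[of 0] unfolding g_def Pr_def ss_def by simp
  have gE: "(g n, g (Suc n)) \<in> E" for n
    unfolding g_def
  proof (rule conc_edges[of L "\<lambda>x y. (the x, the y) \<in> E", OF Lne])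
    show "\<And>k i. Suc i < length (L k) \<Longrightarrow> (the (L k ! i), the (L k ! Suc i)) \<in> E"
      using PrL unfolding Pr_def by blast
    fix k
    have "last (L k) = Some (ss (Suc k))" "hd (L (Suc k)) = Some (e (ss (Suc k)))"
      using PrL[of k] PrL[of "Suc k"] unfolding Pr_def by blast+
    moreover have "(ss (Suc k), e (ss (Suc k))) \<in> E" using e_prop ssY by blast
    ultimately show "(the (last (L k)), the (hd (L (Suc k)))) \<in> E" by simp
  qed
  have esW: "e s0 \<in> W" using W_closed e_prop s0 by blast
  have win: "parity_win0 c g" using esW g0 gE unfolding W_def by blast
  have fin: "finite (range (\<lambda>n. c (the (conc L n))))"
  proof -
    have "range (\<lambda>n. c (the (conc L n))) \<subseteq> c ` V"
    proof
      fix x assume "x \<in> range (\<lambda>n. c (the (conc L n)))"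
      then obtain n where n: "x = c (the (conc L n))" by blast
      obtain w where "w \<in> V" "conc L n = Some w" using rng[of n] by blast
      then show "x \<in> c ` V" using n by simp
    qed
    then show ?thesis using finV finite_subset by blast
  qed
  have "odd (Max (infc (\<lambda>x. c (the x)) (conc L)))"
  proof (rule conc_parity[of L, OF Lne])
    show "finite (range (\<lambda>n. c (the (conc L n))))" by (rule fin)
    fix k
    have "(\<lambda>x. c (the x)) ` set (L k) = cols c (L k)" using PrL[of k] cols_the unfolding Pr_def by blast
    then show "odd (Max ((\<lambda>x. c (the x)) ` set (L k)))" using PrL[of k] unfolding Pr_def by simp
  qed
  moreover have "infc (\<lambda>x. c (the x)) (conc L) = infc c g" unfolding infc_def g_def by simp
  ultimately show False using win unfolding parity_infc by simp
qed

lemma OPT: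
  assumes AB: "A \<subseteq> B" "B \<subseteq> V0" and XB: "Xs (strat A B) \<subseteq> B"
  shows "optimal_winning V E own c (strat A B)"
  unfolding optimal_winning_def
proof
  fix s assume s: "s \<in> W0 V E own c"
  have sW: "s \<in> W" using s W0_W by blast
  have sV: "s \<in> V" using sW unfolding W_def by blast
  have core: "W \<inter> V0 \<subseteq> B" using opt_core[OF AB XB] .
  have g2: "goodS (strat B B)" using strat_good AB by blast
  have A1: "strat B B \<subseteq> strat A B" using strat_sub AB by blast
  have A2: "is_strategy V E own 0 (strat B B)" using g2 unfolding goodS_def is_strategy_def by simp
  have C: "\<forall>\<tau>. is_strategy V E own 1 \<tau> \<longrightarrow>
        (\<forall>xs. \<not> fin_play (strat B B \<union> \<tau>) (Some s) xs) \<and>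
        (\<forall>f. inf_play (strat B B \<union> \<tau>) (Some s) f \<longrightarrow> inf_prof c f = PosInf)"
  proof (intro allI impI)
    fix \<tau> assume "is_strategy V E own 1 \<tau>"
    then have t: "\<tau> \<in> T1" unfolding T1_def by simp
    have P1: "\<forall>xs. \<not> fin_play (strat B B \<union> \<tau>) (Some s) xs"
    proof (intro allI notI)
      fix xs assume fp: "fin_play (strat B B \<union> \<tau>) (Some s) xs"
      obtain ys s' where ys: "xs = ys @ [None]" "ys \<noteq> []" "hd ys = Some s" "set ys \<subseteq> Some ` V"
        "last ys = Some s'" "(Some s', None) \<in> strat B B" "s' \<in> V0"
        "\<And>i. Suc i < length ys \<Longrightarrow> (ys ! i, ys ! Suc i) \<in> strat B B \<union> \<tau>" "cols c xs = cols c ys"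
        using fin_play_decomp[OF g2 t sV fp] by blast
      have edE: "(the (ys ! i), the (ys ! Suc i)) \<in> E" if i: "Suc i < length ys" for i
      proof -
        obtain a b where "ys ! i = Some a" "ys ! Suc i = Some b" using ys(4) i
          by (metis Suc_lessD imageE nth_mem subsetD)
        then show ?thesis using F_E[OF g2 t] ys(8)[OF i] by simp
      qed
      have "the (ys ! (length ys - 1)) \<in> W"
        using list_path_W[OF ys(3) sW ys(2,4) edE] ys(2) by simp
      then have "s' \<in> W" using ys(2,5) by (simp add: last_conv_nth)
      moreover have "s' \<notin> B" using ys(6) strat_stop by blast
      ultimately show False using core ys(7) by blast
    qed
    have P2: "\<forall>f. inf_play (strat B B \<union> \<tau>) (Some s) f \<longrightarrow> inf_prof c f = PosInf"
    proof (intro allI impI)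
      fix f assume ip: "inf_play (strat B B \<union> \<tau>) (Some s) f"
      obtain g where gf: "\<And>n. f n = Some (g n)" "\<And>n. g n \<in> V"
        using inf_play_struct[OF g2 t sV ip] by metis
      have "g 0 = s" "\<forall>i. (g i, g (Suc i)) \<in> E" using ip gf F_E[OF g2 t] unfolding inf_play_def by auto
      then have "parity_win0 c g" using sW unfolding W_def by blast
      moreover have "(\<lambda>i. the (f i)) = g" using gf by simp
      ultimately show "inf_prof c f = PosInf" unfolding inf_prof_def by simp
    qed
    show "(\<forall>xs. \<not> fin_play (strat B B \<union> \<tau>) (Some s) xs) \<and>
        (\<forall>f. inf_play (strat B B \<union> \<tau>) (Some s) f \<longrightarrow> inf_prof c f = PosInf)" using P1 P2 by blast
  qed
  show "wins_with V E own c (strat A B) s" unfolding wins_with_def using A1 A2 C by blast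
qed

definition Yf :: "nat \<Rightarrow> 'v set" where
  "Yf i = (if i = 0 then {} else Xs (sigma_iter V E own c d (i - 1)))"
definition Zf :: "nat \<Rightarrow> 'v set" where
  "Zf i = (if i = 0 then {} else Yf (i - 1))"

lemma sig0: "sigma_iter V E own c d 0 = strat {} {}"
  unfolding sigma_iter_def strat_def by auto

lemma sigS: "sigma_iter V E own c d (Suc i) = improvements V E own c d (sigma_iter V E own c d i)"
  unfolding sigma_iter_def by simp

lemma YfS: "Yf (Suc i) = Xs (sigma_iter V E own c d i)" unfolding Yf_def by simp
lemma ZfS: "Zf (Suc i) = Yf i" unfolding Zf_def by simp

lemma Xs_V0: "Xs \<sigma> \<subseteq> V0" unfolding Xs_def by blast

lemma inv: "sigma_iter V E own c d i = strat (Zf i) (Yf i) \<and> Zf i \<subseteq> Yf i \<and> Yf i \<subseteq> Yf (Suc i) \<and> Yf i \<subseteq> V0"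
proof (induction i)
  case 0 then show ?case using sig0 unfolding Zf_def Yf_def by simp
next
  case (Suc i)
  let ?\<sigma> = "sigma_iter V E own c d i"
  have IH: "?\<sigma> = strat (Zf i) (Yf i)" "Zf i \<subseteq> Yf i" "Yf i \<subseteq> Yf (Suc i)" "Yf i \<subseteq> V0" using Suc by blast+
  have BX: "Yf i \<subseteq> Xs (strat (Zf i) (Yf i))" using IH YfS by simp
  have s1: "sigma_iter V E own c d (Suc i) = strat (Yf i) (Yf (Suc i))"
    using imp_strat(1)[OF IH(2) IH(4) BX] sigS IH(1) YfS by simp
  have Y1V: "Yf (Suc i) \<subseteq> V0" using YfS Xs_V0 by simp
  have g: "goodS (strat (Zf i) (Yf i))" using strat_good IH(2,4) by blast
  have g': "goodS (strat (Yf i) (Yf (Suc i)))" using strat_good IH(3) Y1V by blast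
  have "Pset (strat (Zf i) (Yf i)) \<subseteq> Pset (strat (Yf i) (Yf (Suc i)))"
  proof (rule MONO[OF g g'])
    show "\<forall>s\<in>V0. (Some s, Some (e s)) \<in> strat (Zf i) (Yf i) \<longrightarrow> (Some s, Some (e s)) \<in> strat (Yf i) (Yf (Suc i))"
    proof (intro ballI impI)
      fix s assume "s \<in> V0" "(Some s, Some (e s)) \<in> strat (Zf i) (Yf i)"
      then have "s \<in> Yf i" using strat_cont by metis
      then have "s \<in> Yf (Suc i)" using IH(3) by blast
      then show "(Some s, Some (e s)) \<in> strat (Yf i) (Yf (Suc i))" using strat_cont by metis
    qed
    show "\<forall>s\<in>V0. (Some s, None) \<in> strat (Zf i) (Yf i) \<and> (Some s, None) \<notin> strat (Yf i) (Yf (Suc i)) \<longrightarrow> e s \<in> Pset (strat (Zf i) (Yf i))"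
    proof (intro ballI impI)
      fix s assume s: "s \<in> V0" "(Some s, None) \<in> strat (Zf i) (Yf i) \<and> (Some s, None) \<notin> strat (Yf i) (Yf (Suc i))"
      then have "s \<in> Yf i" using strat_stop[of s "Yf i" "Yf (Suc i)"] by simp
      then have "s \<in> Xs (strat (Zf i) (Yf i))" using BX by blast
      then show "e s \<in> Pset (strat (Zf i) (Yf i))" unfolding Xs_def by blast
    qed
  qed
  then have "Xs (strat (Zf i) (Yf i)) \<subseteq> Xs (strat (Yf i) (Yf (Suc i)))" unfolding Xs_def by blast
  then have "Yf (Suc i) \<subseteq> Yf (Suc (Suc i))" using YfS[of i] YfS[of "Suc i"] s1 IH(1) by simp
  then show ?case using s1 ZfS IH(3) Y1V by simp
qed

lemma strict_iff: "strict_improvements V E own c d (sigma_iter V E own c d i) = {} \<longleftrightarrow> Yf (Suc i) = Yf i"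
proof -
  have IH: "sigma_iter V E own c d i = strat (Zf i) (Yf i)" "Zf i \<subseteq> Yf i" "Yf i \<subseteq> Yf (Suc i)" "Yf i \<subseteq> V0"
    using inv by blast+
  have BX: "Yf i \<subseteq> Xs (strat (Zf i) (Yf i))" using IH YfS by simp
  have "strict_improvements V E own c d (sigma_iter V E own c d i) = {(Some s, Some (e s)) | s. s \<in> Yf (Suc i) - Yf i}"
    using imp_strat(2)[OF IH(2) IH(4) BX] IH(1) YfS by simp
  then show ?thesis using IH(3) by auto
qed

lemma card_grow: "(\<forall>j<i. Yf (Suc j) \<noteq> Yf j) \<Longrightarrow> i \<le> card (Yf i)"
proof (induction i)
  case 0 then show ?case by simp
next
  case (Suc i)
  have pr: "\<forall>j<i. Yf (Suc j) \<noteq> Yf j" using Suc.prems less_SucI by blast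
  have a: "i \<le> card (Yf i)" using Suc.IH pr by blast
  have ne: "Yf (Suc i) \<noteq> Yf i" using Suc.prems lessI by blast
  have sub: "Yf i \<subseteq> Yf (Suc i)" using inv[of i] by blast
  have ps: "Yf i \<subset> Yf (Suc i)" using ne sub by blast
  have "Yf (Suc i) \<subseteq> V0" using inv[of "Suc i"] by blast
  moreover have "finite V0" using finite_subset[OF _ finV] V0V by (simp add: subsetI)
  ultimately have fin: "finite (Yf (Suc i))" by (rule finite_subset)
  have "card (Yf i) < card (Yf (Suc i))" using psubset_card_mono[OF fin ps] .
  then show ?case using a by linarith
qed

lemma main:
  "\<exists>l. strict_improvements V E own c d (sigma_iter V E own c d l) = {}
           \<and> (\<forall>i < l. strict_improvements V E own c d (sigma_iter V E own c d i) \<noteq> {})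
           \<and> real l \<le> 3 * 1.724 ^ card V0
           \<and> optimal_winning V E own c (sigma_iter V E own c d l)"
proof -
  let ?n = "card V0"
  have fV0: "finite V0" using finite_subset[OF _ finV] V0V by (simp add: subsetI)
  have ex: "\<exists>j. Yf (Suc j) = Yf j"
  proof (rule ccontr)
    assume "\<not> (\<exists>j. Yf (Suc j) = Yf j)"
    then have "Suc ?n \<le> card (Yf (Suc ?n))" using card_grow by blast
    moreover have "card (Yf (Suc ?n)) \<le> ?n" using inv[of "Suc ?n"] fV0 card_mono by blast
    ultimately show False by simp
  qed
  define l where "l = (LEAST j. Yf (Suc j) = Yf j)"
  have l1: "Yf (Suc l) = Yf l" unfolding l_def by (rule LeastI_ex[OF ex])
  have l2: "\<forall>i<l. Yf (Suc i) \<noteq> Yf i" unfolding l_def using not_less_Least by blast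
  have "l \<le> card (Yf l)" using card_grow l2 by blast
  moreover have "card (Yf l) \<le> ?n" using inv[of l] fV0 card_mono by blast
  ultimately have ln: "l \<le> ?n" by simp
  have b: "real ?n \<le> 3 * 1.724 ^ ?n"
  proof -
    have "1 + real ?n * 0.724 \<le> (1 + 0.724::real) ^ ?n" using Bernoulli_inequality[of "0.724::real" ?n] by simp
    then show ?thesis by simp
  qed
  have lb: "real l \<le> 3 * 1.724 ^ ?n" using ln b by linarith
  have IH: "sigma_iter V E own c d l = strat (Zf l) (Yf l)" "Zf l \<subseteq> Yf l" "Yf l \<subseteq> V0"
    using inv by blast+
  have "Xs (strat (Zf l) (Yf l)) \<subseteq> Yf l" using YfS[of l] l1 IH(1) by simp
  then have "optimal_winning V E own c (sigma_iter V E own c d l)" using OPT[OF IH(2,3)] IH(1) by simp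
  then show ?thesis using l1 l2 lb strict_iff by blast
qed

end

theorem mainTheorem3:
  fixes V :: "'v set" and E :: "('v \<times> 'v) set" and own c :: "'v \<Rightarrow> nat" and d :: nat
  assumes "arena V E own c d"
    and "standing_assumption V E own c"
    and "\<forall>s \<in> Vown V own 0. card (Ebot V E own `` {Some s}) \<le> 2"
  shows "\<exists>l. strict_improvements V E own c d (sigma_iter V E own c d l) = {}
           \<and> (\<forall>i < l. strict_improvements V E own c d (sigma_iter V E own c d i) \<noteq> {})
           \<and> real l \<le> 3 * 1.724 ^ card (Vown V own 0)
           \<and> optimal_winning V E own c (sigma_iter V E own c d l)"
proof -
  interpret G V E own c d using assms(1,3) by unfold_locales
  show ?thesis using main .
qed


end
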